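(* Suppose $|\langle\Theta\rangle|$ divides $\alpha$ and $|\langle\theta\rangle|$ divides $\beta$. Let $\mathcal{C}=\mathcal{C}'\otimes\mathscr{C}$ be an $\mathbb{F}_q\mathcal{R}$-skew cyclic code of length $(\alpha,\beta)$, where $\mathcal{C}'=\langle f(x)\rangle$ is a skew cyclic code of length $\alpha$ over $\mathbb{F}_q$ and $\mathscr{C}=\xi_1\mathcal{C}_1\oplus\xi_2\mathcal{C}_2=\langle \xi_1g_1(x)+\xi_2g_2(x)\rangle$ is a skew cyclic code of length $\beta$ over $\mathcal{R}$ with $\mathcal{C}_i=\langle g_i(x)\rangle$ skew cyclic over $\mathbb{F}_q$, and $x^\alpha-1=h(x)f(x)$, $x^\beta-1=h_i(x)g_i(x)$ for $i=1,2$. If $h^\dagger(x)h(x)$ is divisible by $x^\alpha-1$ from the right side and $h_i^\dagger(x)h_i(x)$ is divisible by $x^\beta-1$ from the right side for $i=1,2$, then there exists a quantum code with parameters $[[\alpha+2\beta,\,2k-(\alpha+2\beta),\,d_H]]_q$, where $k$ is the dimension and $d_H$ the minimum Hamming distance of the $\mathbb{F}_q$-linear code $\varphi(\mathcal{C})$.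
   Context: Let $p$ be a prime, $q=p^m$, $\mathcal{R}=\mathbb{F}_q[u]/\langle u^2-u\rangle$, $\xi_1=1-u$, $\xi_2=u$; every $r\in\mathcal{R}$ is uniquely $\xi_1r_1+\xi_2r_2$, $r_1,r_2\in\mathbb{F}_q$. Fix $i$; $\Theta(a)=a^{p^i}$ on $\mathbb{F}_q$, $\theta(a+ub)=a^{p^i}+ub^{p^i}$ on $\mathcal{R}$, $\eta(a+ub)=a$; $|\langle\cdot\rangle|$ denotes the order of an automorphism. $\mathbb{F}_q[x;\Theta]$ is the skew polynomial ring with $(ax^i)(bx^j)=a\Theta^i(b)x^{i+j}$. A skew cyclic code of length $n$ over $\mathbb{F}_q$ is a linear code closed under $(c_0,\dots,c_{n-1})\mapsto(\Theta(c_{n-1}),\Theta(c_0),\dots,\Theta(c_{n-2}))$, identified with the left submodule $\langle g(x)\rangle$ of $\mathbb{F}_q[x;\Theta]/\langle x^n-1\rangle$ generated by a right divisor $g$ of $x^n-1$; skew cyclic codes over $\mathcal{R}$ are defined analogously with $\theta$. An $\mathbb{F}_q\mathcal{R}$-skew cyclic code of length $(\alpha,\beta)$ is an $\mathcal{R}$-submodule of $\mathbb{F}_q^\alpha\times\mathcal{R}^\beta$ (with $s*(x,y)=(\eta(s)x,sy)$ componentwise) closed under $\sigma(x_0,\dots,x_{\alpha-1},y_0,\dots,y_{\beta-1})=(\Theta(x_{\alpha-1}),\Theta(x_0),\dots,\Theta(x_{\alpha-2}),\theta(y_{\beta-1}),\theta(y_0),\dots,\theta(y_{\beta-2}))$;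 $A\otimes B=\{(a,b):a\in A,b\in B\}$. For $h(x)=h_0+\dots+h_sx^s$, $h^\dagger(x)=h_s+\Theta(h_{s-1})x+\dots+\Theta^s(h_0)x^s$; "divisible by $b(x)$ from the right side" means equal to $c(x)b(x)$ for some $c(x)$. Fix $M\in GL_2(\mathbb{F}_q)$ with $MM^T=\gamma I_2$, $\gamma\in\mathbb{F}_q^*$; the Gray map is $\varphi(a_0,\dots,a_{\alpha-1},r_0,\dots,r_{\beta-1})=(a_0,\dots,a_{\alpha-1},(r_{0,1},r_{0,2})M,\dots,(r_{\beta-1,1},r_{\beta-1,2})M)\in\mathbb{F}_q^{\alpha+2\beta}$, where $r_j=\xi_1r_{j,1}+\xi_2r_{j,2}$. A $q$-ary quantum code $[[n,K,d]]_q$ is a $q^K$-dimensional subspace of $(\mathbb{C}^q)^{\otimes n}$ with minimum distance $d$. *)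

theory Defs
  imports "HOL-Analysis.Analysis" "HOL-Computational_Algebra.Polynomial" "HOL-Library.Function_Algebras"
begin

text \<open>Skew polynomials are represented by their coefficient sequences (type 'a poly);
  only the multiplication differs: (a x^i)(b x^j) = a Theta^i(b) x^(i+j).\<close>

definition skew_mult :: "('a::comm_ring_1 \<Rightarrow> 'a) \<Rightarrow> 'a poly \<Rightarrow> 'a poly \<Rightarrow> 'a poly" where
  "skew_mult Th f g =
     (\<Sum>i\<le>degree f. \<Sum>j\<le>degree g. monom (coeff f i * (Th ^^ i) (coeff g j)) (i + j))"

definition xn1 :: "nat \<Rightarrow> 'a::comm_ring_1 poly" where
  "xn1 n = monom 1 n - 1"

definition skew_dagger :: "('a::comm_ring_1 \<Rightarrow> 'a) \<Rightarrow> 'a poly \<Rightarrow> 'a poly" where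
  "skew_dagger Th h = (\<Sum>j\<le>degree h. monom ((Th ^^ j) (coeff h (degree h - j))) j)"

definition right_dvd :: "('a::comm_ring_1 \<Rightarrow> 'a) \<Rightarrow> 'a poly \<Rightarrow> 'a poly \<Rightarrow> bool" where
  "right_dvd Th b a \<longleftrightarrow> (\<exists>c. a = skew_mult Th c b)"

definition aut_order :: "('b \<Rightarrow> 'b) \<Rightarrow> nat" where
  "aut_order T = (LEAST t. t > 0 \<and> T ^^ t = id)"

text \<open>The code <g(x)> of length n: the left submodule of F_q[x;Theta]/<x^n-1> generated by g,
  elements represented by their residues of degree < n, written as coefficient vectors.\<close>
definition skew_code_gen :: "('a::comm_ring_1 \<Rightarrow> 'a) \<Rightarrow> nat \<Rightarrow> 'a poly \<Rightarrow> 'a list set" where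
  "skew_code_gen Th n g =
     {map (coeff r) [0..<n] | r. degree r < n \<and>
        (\<exists>a c. r = skew_mult Th a g + skew_mult Th c (xn1 n))}"

section \<open>The ring R = F_q[u]/<u^2-u>\<close>

text \<open>An element a + u b of R is represented by the pair (a, b).\<close>
type_synonym 'a rring = "'a \<times> 'a"

definition R_add :: "'a::comm_ring_1 rring \<Rightarrow> 'a rring \<Rightarrow> 'a rring" where
  "R_add r s = (fst r + fst s, snd r + snd s)"

text \<open>(a + u b)(c + u d) = ac + u(ad + bc + bd), using u^2 = u.\<close>
definition R_mult :: "'a::comm_ring_1 rring \<Rightarrow> 'a rring \<Rightarrow> 'a rring" where
  "R_mult r s = (fst r * fst s, fst r * snd s + snd r * fst s + snd r * snd s)"

definition R_zero :: "'a::comm_ring_1 rring" where "R_zero = (0, 0)"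

definition R_of :: "'a::comm_ring_1 \<Rightarrow> 'a rring" where "R_of a = (a, 0)"

definition xi1 :: "'a::comm_ring_1 rring" where "xi1 = (1, -1)"   \<comment> \<open>1 - u\<close>
definition xi2 :: "'a::comm_ring_1 rring" where "xi2 = (0, 1)"    \<comment> \<open>u\<close>

text \<open>Components r = xi1 r1 + xi2 r2 (r1 = a, r2 = a + b for r = a + u b).\<close>
definition R_comp1 :: "'a::comm_ring_1 rring \<Rightarrow> 'a" where "R_comp1 r = fst r"
definition R_comp2 :: "'a::comm_ring_1 rring \<Rightarrow> 'a" where "R_comp2 r = fst r + snd r"

definition R_theta :: "('a \<Rightarrow> 'a) \<Rightarrow> 'a rring \<Rightarrow> 'a rring" where
  "R_theta Th r = (Th (fst r), Th (snd r))"

definition R_eta :: "'a rring \<Rightarrow> 'a" where "R_eta r = fst r"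

definition xi_sum :: "'a::comm_ring_1 list set \<Rightarrow> 'a list set \<Rightarrow> 'a rring list set" where
  "xi_sum C1 C2 = {map2 (\<lambda>a b. R_add (R_mult xi1 (R_of a)) (R_mult xi2 (R_of b))) c1 c2
                     | c1 c2. c1 \<in> C1 \<and> c2 \<in> C2 \<and> length c1 = length c2}"

type_synonym 'a mixed_word = "'a list \<times> 'a rring list"

definition skew_shift :: "('b \<Rightarrow> 'b) \<Rightarrow> 'b list \<Rightarrow> 'b list" where
  "skew_shift T xs = (if xs = [] then [] else map T (last xs # butlast xs))"

definition sigma_shift :: "('a \<Rightarrow> 'a) \<Rightarrow> 'a mixed_word \<Rightarrow> 'a mixed_word" where
  "sigma_shift Th w = (skew_shift Th (fst w), skew_shift (R_theta Th) (snd w))"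

definition mixed_add :: "'a::comm_ring_1 mixed_word \<Rightarrow> 'a mixed_word \<Rightarrow> 'a mixed_word" where
  "mixed_add v w = (map2 (+) (fst v) (fst w), map2 R_add (snd v) (snd w))"

definition mixed_smult :: "'a::comm_ring_1 rring \<Rightarrow> 'a mixed_word \<Rightarrow> 'a mixed_word" where
  "mixed_smult s w = (map (\<lambda>x. R_eta s * x) (fst w), map (R_mult s) (snd w))"

definition FqR_skew_cyclic ::
  "('a::comm_ring_1 \<Rightarrow> 'a) \<Rightarrow> nat \<Rightarrow> nat \<Rightarrow> 'a mixed_word set \<Rightarrow> bool" where
  "FqR_skew_cyclic Th \<alpha> \<beta> C \<longleftrightarrow>
     C \<subseteq> {w. length (fst w) = \<alpha> \<and> length (snd w) = \<beta>} \<and>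
     (replicate \<alpha> 0, replicate \<beta> R_zero) \<in> C \<and>
     (\<forall>v\<in>C. \<forall>w\<in>C. mixed_add v w \<in> C) \<and>
     (\<forall>s. \<forall>w\<in>C. mixed_smult s w \<in> C) \<and>
     (\<forall>w\<in>C. sigma_shift Th w \<in> C)"

definition code_tensor :: "'b set \<Rightarrow> 'c set \<Rightarrow> ('b \<times> 'c) set" where
  "code_tensor A B = {(a, b). a \<in> A \<and> b \<in> B}"

definition gray_pair :: "'a::comm_ring_1 ^2^2 \<Rightarrow> 'a rring \<Rightarrow> 'a list" where
  "gray_pair M r = (let v = vector_matrix_mult (vector [R_comp1 r, R_comp2 r]) M
                    in [v $ 1, v $ 2])"

definition gray :: "'a::comm_ring_1 ^2^2 \<Rightarrow> 'a mixed_word \<Rightarrow> 'a list" where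
  "gray M w = fst w @ concat (map (gray_pair M) (snd w))"

definition word_fun :: "'a::zero list \<Rightarrow> nat \<Rightarrow> 'a" where
  "word_fun xs = (\<lambda>i. if i < length xs then xs ! i else 0)"

definition code_dim :: "'a::field list set \<Rightarrow> nat" where
  "code_dim C = vector_space.dim (\<lambda>c v. (\<lambda>i. c * v i)) (word_fun ` C)"

definition hamming_dist :: "'b list \<Rightarrow> 'b list \<Rightarrow> nat" where
  "hamming_dist x y = card {i. i < length x \<and> x ! i \<noteq> y ! i}"

definition min_dist :: "'b list set \<Rightarrow> nat" where
  "min_dist C = Min {hamming_dist x y | x y. x \<in> C \<and> y \<in> C \<and> x \<noteq> y}"

text \<open>(C^q)^(tensor n) is modelled as the space of complex functions on the computational
  basis F_q^n (words of length n); vectors vanish outside words of length n.\<close>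

definition abs_trace :: "nat \<Rightarrow> nat \<Rightarrow> 'a::comm_ring_1 \<Rightarrow> 'a" where
  "abs_trace p m z = (\<Sum>j<m. z ^ (p ^ j))"

text \<open>omega^(Tr z), omega = exp(2 pi i / p); Tr z lies in the prime field {0,...,p-1}.\<close>
definition add_char :: "nat \<Rightarrow> nat \<Rightarrow> 'a::comm_ring_1 \<Rightarrow> complex" where
  "add_char p m z = cis (2 * pi * real (THE t. t < p \<and> of_nat t = abs_trace p m z) / real p)"

definition word_dot :: "'a::comm_ring_1 list \<Rightarrow> 'a list \<Rightarrow> 'a" where
  "word_dot a b = sum_list (map2 (*) a b)"

text \<open>Error operator X(a) Z(b): |x> |-> omega^(Tr(b.x)) |x + a>.\<close>
definition pauli_err :: "nat \<Rightarrow> nat \<Rightarrow> nat \<Rightarrow> 'a::comm_ring_1 list \<Rightarrow> 'a list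
      \<Rightarrow> ('a list \<Rightarrow> complex) \<Rightarrow> ('a list \<Rightarrow> complex)" where
  "pauli_err p m n a b v = (\<lambda>y. if length y = n then
       add_char p m (word_dot b (map2 (-) y a)) * v (map2 (-) y a) else 0)"

definition pauli_weight :: "'a::zero list \<Rightarrow> 'a list \<Rightarrow> nat" where
  "pauli_weight a b = card {i. i < length a \<and> (a ! i \<noteq> 0 \<or> b ! i \<noteq> 0)}"

definition qinner :: "nat \<Rightarrow> ('a::finite list \<Rightarrow> complex) \<Rightarrow> ('a list \<Rightarrow> complex) \<Rightarrow> complex" where
  "qinner n u v = (\<Sum>x\<in>{x. length x = n}. cnj (u x) * v x)"

text \<open>A q-ary quantum code [[n, K, d]]_q (q = p^m): a q^K-dimensional subspace Q of
  (C^q)^(tensor n) detecting every error of weight less than d.\<close>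
definition quantum_code :: "nat \<Rightarrow> nat \<Rightarrow> nat \<Rightarrow> nat \<Rightarrow> nat
      \<Rightarrow> ('a::{finite,comm_ring_1} list \<Rightarrow> complex) set \<Rightarrow> bool" where
  "quantum_code p m n K d Q \<longleftrightarrow>
     (\<forall>v\<in>Q. \<forall>x. length x \<noteq> n \<longrightarrow> v x = 0) \<and>
     (\<lambda>x. 0) \<in> Q \<and>
     (\<forall>u\<in>Q. \<forall>v\<in>Q. (\<lambda>x. u x + v x) \<in> Q) \<and>
     (\<forall>c. \<forall>v\<in>Q. (\<lambda>x. c * v x) \<in> Q) \<and>
     vector_space.dim (\<lambda>c v. (\<lambda>x. c * v x)) Q = (p ^ m) ^ K \<and>
     (\<forall>a b. length a = n \<longrightarrow> length b = n \<longrightarrow> pauli_weight a b < d \<longrightarrow>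
        (\<exists>lam. \<forall>u\<in>Q. \<forall>v\<in>Q. qinner n u (pauli_err p m n a b v) = lam * qinner n u v))"

end

theory Submission
  imports Defs "HOL-Computational_Algebra.Primes"
begin

definition rhom :: "('a::comm_ring_1 \<Rightarrow> 'a) \<Rightarrow> bool" where
  "rhom T \<longleftrightarrow> (\<forall>a b. T (a + b) = T a + T b) \<and> (\<forall>a b. T (a * b) = T a * T b) \<and> T 1 = 1"

lemma rhom_add: "rhom T \<Longrightarrow> T (a + b) = T a + T b" unfolding rhom_def by blast
lemma rhom_mult: "rhom T \<Longrightarrow> T (a * b) = T a * T b" unfolding rhom_def by blast
lemma rhom_1: "rhom T \<Longrightarrow> T 1 = 1" unfolding rhom_def by blast
lemma rhom_0: "rhom T \<Longrightarrow> T 0 = 0"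
proof -
  assume "rhom T"
  then have "T 0 + T 0 = T 0 + 0" using rhom_add[of T 0 0] by simp
  then show ?thesis by simp
qed
lemma rhom_uminus: "rhom T \<Longrightarrow> T (- a) = - T a"
proof -
  assume h: "rhom T"
  then have "T a + T (- a) = 0" using rhom_add[of T a "-a"] rhom_0[OF h] by simp
  then show ?thesis by (simp add: add_eq_0_iff)
qed
lemma rhom_diff: "rhom T \<Longrightarrow> T (a - b) = T a - T b"
  using rhom_add[of T a "-b"] rhom_uminus[of T b] by simp
lemma rhom_sum: "rhom T \<Longrightarrow> T (sum g A) = (\<Sum>x\<in>A. T (g x))"
  by (induction A rule: infinite_finite_induct) (auto simp: rhom_0 rhom_add)
lemma rhom_funpow: "rhom T \<Longrightarrow> rhom (T ^^ n)"
proof (induction n)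
  case 0 then show ?case by (simp add: rhom_def)
next
  case (Suc n)
  then show ?case unfolding rhom_def by (simp add: rhom_add rhom_mult rhom_1)
qed

lemma coeff_skew_mult:
  assumes "rhom Th"
  shows "coeff (skew_mult Th f g) k = (\<Sum>i\<le>k. coeff f i * (Th ^^ i) (coeff g (k - i)))"
proof -
  have z: "(Th ^^ i) 0 = 0" for i using rhom_0[OF rhom_funpow[OF assms]] .
  have "coeff (skew_mult Th f g) k =
     (\<Sum>i\<le>degree f. \<Sum>j\<le>degree g. if i + j = k then coeff f i * (Th ^^ i) (coeff g j) else 0)"
    unfolding skew_mult_def by (simp add: coeff_sum coeff_monom)
  also have "\<dots> = (\<Sum>i\<le>degree f. if i \<le> k then coeff f i * (Th ^^ i) (coeff g (k - i)) else 0)"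
  proof (rule sum.cong[OF refl])
    fix i assume "i \<in> {..degree f}"
    show "(\<Sum>j\<le>degree g. if i + j = k then coeff f i * (Th ^^ i) (coeff g j) else 0) =
          (if i \<le> k then coeff f i * (Th ^^ i) (coeff g (k - i)) else 0)"
    proof (cases "i \<le> k \<and> k - i \<le> degree g")
      case True
      then have "(\<Sum>j\<le>degree g. if i + j = k then coeff f i * (Th ^^ i) (coeff g j) else 0)
          = (\<Sum>j\<in>{k - i}. coeff f i * (Th ^^ i) (coeff g j))"
        by (intro sum.mono_neutral_cong_right) auto
      then show ?thesis using True by simp
    next
      case False
      then show ?thesis
        by (auto intro!: sum.neutral simp: z coeff_eq_0)
    qed
  qed
  also have "\<dots> = (\<Sum>i\<le>k. coeff f i * (Th ^^ i) (coeff g (k - i)))"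
  proof -
    have "(\<Sum>i\<le>degree f. if i \<le> k then coeff f i * (Th ^^ i) (coeff g (k - i)) else 0)
        = (\<Sum>i\<in>{i\<in>{..degree f}. i \<le> k}. coeff f i * (Th ^^ i) (coeff g (k - i)))"
      by (simp add: sum.inter_filter[symmetric])
    also have "\<dots> = (\<Sum>i\<le>k. coeff f i * (Th ^^ i) (coeff g (k - i)))"
      by (intro sum.mono_neutral_left) (auto intro: le_degree)
    finally show ?thesis .
  qed
  finally show ?thesis .
qed


lemma funpow_0_rhom: "rhom Th \<Longrightarrow> (Th ^^ i) 0 = 0"
  using rhom_0[OF rhom_funpow] .

lemma skew_mult_add_left:
  assumes "rhom Th"
  shows "skew_mult Th (a + b) g = skew_mult Th a g + skew_mult Th b g"
  by (rule poly_eqI) (simp add: coeff_skew_mult[OF assms] distrib_right sum.distrib)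

lemma skew_mult_add_right:
  assumes "rhom Th"
  shows "skew_mult Th g (a + b) = skew_mult Th g a + skew_mult Th g b"
  by (rule poly_eqI) (simp add: coeff_skew_mult[OF assms] rhom_add[OF rhom_funpow[OF assms]]
      distrib_left sum.distrib)

lemma skew_mult_0_left [simp]: "rhom Th \<Longrightarrow> skew_mult Th 0 g = 0"
  by (rule poly_eqI) (simp add: coeff_skew_mult)

lemma skew_mult_0_right [simp]: "rhom Th \<Longrightarrow> skew_mult Th g 0 = 0"
  by (rule poly_eqI) (simp add: coeff_skew_mult funpow_0_rhom)

lemma skew_mult_uminus_left:
  assumes "rhom Th"
  shows "skew_mult Th (- a) g = - skew_mult Th a g"
  by (rule poly_eqI) (simp add: coeff_skew_mult[OF assms] sum_negf)

lemma skew_mult_diff_left: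
  assumes "rhom Th"
  shows "skew_mult Th (a - b) g = skew_mult Th a g - skew_mult Th b g"
  by (rule poly_eqI) (simp add: coeff_skew_mult[OF assms] left_diff_distrib sum_subtractf)

lemma skew_mult_diff_right:
  assumes "rhom Th"
  shows "skew_mult Th g (a - b) = skew_mult Th g a - skew_mult Th g b"
  by (rule poly_eqI) (simp add: coeff_skew_mult[OF assms] rhom_diff[OF rhom_funpow[OF assms]]
      right_diff_distrib sum_subtractf)

lemma skew_mult_smult_left:
  assumes "rhom Th"
  shows "skew_mult Th (smult c a) g = smult c (skew_mult Th a g)"
  by (rule poly_eqI) (simp add: coeff_skew_mult[OF assms] sum_distrib_left mult.assoc)

lemma funpow_add_apply: "(Th ^^ (i + j)) x = (Th ^^ i) ((Th ^^ j) x)"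
  by (simp add: funpow_add)

lemma skew_mult_assoc:
  assumes "rhom Th"
  shows "skew_mult Th (skew_mult Th a b) c = skew_mult Th a (skew_mult Th b c)"
proof (rule poly_eqI)
  fix k
  have R: "rhom (Th ^^ i)" for i using rhom_funpow[OF assms] .
  have "coeff (skew_mult Th (skew_mult Th a b) c) k =
      (\<Sum>l\<le>k. \<Sum>i\<le>l. coeff a i * (Th ^^ i) (coeff b (l - i)) * (Th ^^ l) (coeff c (k - l)))"
    by (simp add: coeff_skew_mult[OF assms] sum_distrib_right)
  also have "\<dots> = (\<Sum>(l, i)\<in>Sigma {..k} (\<lambda>l. {..l}).
       coeff a i * (Th ^^ i) (coeff b (l - i)) * (Th ^^ l) (coeff c (k - l)))"
    by (simp add: sum.Sigma)
  also have "\<dots> = (\<Sum>(i, j)\<in>Sigma {..k} (\<lambda>i. {..k - i}).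
       coeff a i * (Th ^^ i) (coeff b j) * (Th ^^ (i + j)) (coeff c (k - i - j)))"
    by (rule sum.reindex_bij_witness[where i = "\<lambda>(i, j). (i + j, i)" and j = "\<lambda>(l, i). (i, l - i)"])
       (auto simp: add.commute diff_diff_eq)
  also have "\<dots> = (\<Sum>i\<le>k. \<Sum>j\<le>k - i.
       coeff a i * (Th ^^ i) (coeff b j) * (Th ^^ (i + j)) (coeff c (k - i - j)))"
    by (simp add: sum.Sigma)
  also have "\<dots> = coeff (skew_mult Th a (skew_mult Th b c)) k"
    by (simp add: coeff_skew_mult[OF assms] rhom_sum[OF R] rhom_mult[OF R] sum_distrib_left
        funpow_add_apply mult.assoc diff_diff_eq)
  finally show "coeff (skew_mult Th (skew_mult Th a b) c) k = coeff (skew_mult Th a (skew_mult Th b c)) k" .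
qed


lemma coeff_skew_mult_high:
  assumes "rhom Th" "k > degree a + degree b"
  shows "coeff (skew_mult Th a b) k = 0"
  unfolding coeff_skew_mult[OF assms(1)]
proof (rule sum.neutral, intro ballI)
  fix i assume "i \<in> {..k}"
  show "coeff a i * (Th ^^ i) (coeff b (k - i)) = 0"
  proof (cases "i > degree a")
    case True then show ?thesis by (simp add: coeff_eq_0)
  next
    case False
    then have "k - i > degree b" using assms(2) by linarith
    then show ?thesis by (simp add: coeff_eq_0 funpow_0_rhom[OF assms(1)])
  qed
qed

lemma coeff_skew_mult_top:
  assumes "rhom Th"
  shows "coeff (skew_mult Th a b) (degree a + degree b) = lead_coeff a * (Th ^^ degree a) (lead_coeff b)"
  unfolding coeff_skew_mult[OF assms(1)]
proof -
  have "(\<Sum>i\<le>degree a + degree b. coeff a i * (Th ^^ i) (coeff b (degree a + degree b - i)))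
     = (\<Sum>i\<in>{degree a}. coeff a i * (Th ^^ i) (coeff b (degree a + degree b - i)))"
  proof (rule sum.mono_neutral_right)
    show "\<forall>i\<in>{..degree a + degree b} - {degree a}. coeff a i * (Th ^^ i) (coeff b (degree a + degree b - i)) = 0"
    proof
      fix i assume i: "i \<in> {..degree a + degree b} - {degree a}"
      show "coeff a i * (Th ^^ i) (coeff b (degree a + degree b - i)) = 0"
      proof (cases "i > degree a")
        case True then show ?thesis by (simp add: coeff_eq_0)
      next
        case False
        then have "degree a + degree b - i > degree b" using i by auto
        then show ?thesis by (simp add: coeff_eq_0 funpow_0_rhom[OF assms(1)])
      qed
    qed
  qed auto
  then show "(\<Sum>i\<le>degree a + degree b. coeff a i * (Th ^^ i) (coeff b (degree a + degree b - i))) =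
    lead_coeff a * (Th ^^ degree a) (lead_coeff b)" by simp
qed

lemma inj_funpow_rhom:
  fixes Th :: "'a \<Rightarrow> 'a"
  assumes "inj Th" shows "inj (Th ^^ n)"
proof (induction n)
  case 0 then show ?case by (simp add: inj_def)
next
  case (Suc n)
  have "Th ^^ Suc n = Th \<circ> (Th ^^ n)" by simp
  then show ?case using Suc assms inj_compose by metis
qed

lemma degree_skew_mult:
  fixes a b :: "'a::idom poly"
  assumes "rhom Th" "inj Th" "a \<noteq> 0" "b \<noteq> 0"
  shows "degree (skew_mult Th a b) = degree a + degree b"
    and "skew_mult Th a b \<noteq> 0"
proof -
  have "(Th ^^ degree a) (lead_coeff b) \<noteq> 0"
  proof
    assume "(Th ^^ degree a) (lead_coeff b) = 0"
    then have "(Th ^^ degree a) (lead_coeff b) = (Th ^^ degree a) 0" by (simp add: funpow_0_rhom[OF assms(1)])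
    then have "lead_coeff b = 0" using inj_funpow_rhom[OF assms(2), of "degree a"] unfolding inj_def by blast
    then show False using assms(4) by simp
  qed
  then have nz: "coeff (skew_mult Th a b) (degree a + degree b) \<noteq> 0"
    using assms(3) by (simp add: coeff_skew_mult_top[OF assms(1)])
  then show "skew_mult Th a b \<noteq> 0" by auto
  show "degree (skew_mult Th a b) = degree a + degree b"
  proof (rule antisym)
    show "degree (skew_mult Th a b) \<le> degree a + degree b"
      by (rule degree_le) (auto intro: coeff_skew_mult_high[OF assms(1)])
    show "degree a + degree b \<le> degree (skew_mult Th a b)"
      using nz by (rule le_degree)
  qed
qed

lemma skew_mult_eq_0_iff:
  fixes a b :: "'a::idom poly"
  assumes "rhom Th" "inj Th"
  shows "skew_mult Th a b = 0 \<longleftrightarrow> a = 0 \<or> b = 0"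
  using degree_skew_mult(2)[OF assms] assms(1) by auto

lemma skew_cancel_right:
  fixes a b :: "'a::idom poly"
  assumes "rhom Th" "inj Th" "skew_mult Th a g = skew_mult Th b g" "g \<noteq> 0"
  shows "a = b"
proof -
  have "skew_mult Th (a - b) g = 0" using assms by (simp add: skew_mult_diff_left)
  then have "a - b = 0" using assms skew_mult_eq_0_iff by blast
  then show ?thesis by simp
qed

lemma skew_cancel_left:
  fixes a b :: "'a::idom poly"
  assumes "rhom Th" "inj Th" "skew_mult Th g a = skew_mult Th g b" "g \<noteq> 0"
  shows "a = b"
proof -
  have "skew_mult Th g (a - b) = 0" using assms by (simp add: skew_mult_diff_right)
  then have "a - b = 0" using assms skew_mult_eq_0_iff by blast
  then show ?thesis by simp
qed

lemma coeff_xn1: "coeff (xn1 n) k = (if k = n then 1 else 0) - (if k = 0 then 1 else 0)"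
  by (simp add: xn1_def coeff_monom)

lemma coeff_skew_mult_xn1_right:
  assumes "rhom Th" "n > 0"
  shows "coeff (skew_mult Th c (xn1 n)) k = (if n \<le> k then coeff c (k - n) else 0) - coeff c k"
proof -
  have R: "rhom (Th ^^ i)" for i using rhom_funpow[OF assms(1)] .
  have "coeff (skew_mult Th c (xn1 n)) k =
     (\<Sum>i\<le>k. (if i = k - n \<and> n \<le> k then coeff c i else 0) - (if i = k then coeff c i else 0))"
    unfolding coeff_skew_mult[OF assms(1)] coeff_xn1
    by (intro sum.cong refl) (auto simp: rhom_diff[OF R] rhom_1[OF R] rhom_0[OF R])
  also have "\<dots> = (if n \<le> k then coeff c (k - n) else 0) - coeff c k"
    by (simp add: sum_subtractf sum.delta)
  finally show ?thesis .
qed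

lemma coeff_skew_mult_xn1_left:
  assumes "rhom Th" "n > 0" "Th ^^ n = id"
  shows "coeff (skew_mult Th (xn1 n) c) k = (if n \<le> k then coeff c (k - n) else 0) - coeff c k"
proof -
  have R: "rhom (Th ^^ i)" for i using rhom_funpow[OF assms(1)] .
  have "coeff (skew_mult Th (xn1 n) c) k =
     (\<Sum>i\<le>k. (if i = n \<and> n \<le> k then coeff c (k - n) else 0) - (if i = 0 then coeff c k else 0))"
    unfolding coeff_skew_mult[OF assms(1)] coeff_xn1
    using assms(2,3) by (intro sum.cong refl) (auto simp: left_diff_distrib)
  also have "\<dots> = (if n \<le> k then coeff c (k - n) else 0) - coeff c k"
    by (simp add: sum_subtractf sum.delta)
  finally show ?thesis .
qed

lemma xn1_central:
  assumes "rhom Th" "n > 0" "Th ^^ n = id"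
  shows "skew_mult Th (xn1 n) c = skew_mult Th c (xn1 n)"
  by (rule poly_eqI) (simp add: coeff_skew_mult_xn1_left[OF assms] coeff_skew_mult_xn1_right[OF assms(1,2)])

lemma xn1_nonzero: "n > 0 \<Longrightarrow> xn1 n \<noteq> (0 :: 'a::comm_ring_1 poly)"
proof
  assume "n > 0" "xn1 n = (0 :: 'a poly)"
  then have "coeff (xn1 n) n = (0::'a)" by simp
  with \<open>n > 0\<close> show False by (simp add: coeff_xn1)
qed

lemma degree_xn1: "n > 0 \<Longrightarrow> degree (xn1 n :: 'a::comm_ring_1 poly) = n"
proof -
  assume "n > 0"
  have "degree (1 :: 'a poly) < degree (monom (1::'a) n)" using \<open>n > 0\<close> by (simp add: degree_monom_eq)
  then have "degree (monom (1::'a) n + - 1) = n" by (subst degree_add_eq_left) (simp_all add: degree_monom_eq)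
  then show ?thesis unfolding xn1_def by simp
qed

lemma central_swap:
  fixes h f :: "'a::idom poly"
  assumes "rhom Th" "inj Th" "n > 0" "Th ^^ n = id" "xn1 n = skew_mult Th h f"
  shows "xn1 n = skew_mult Th f h"
proof -
  have hnz: "h \<noteq> 0" using assms(1,5) xn1_nonzero[OF assms(3)] by auto
  have "skew_mult Th h (skew_mult Th f h) = skew_mult Th (xn1 n) h"
    by (simp add: assms(5) skew_mult_assoc[OF assms(1)])
  also have "\<dots> = skew_mult Th h (xn1 n)" by (rule xn1_central[OF assms(1,3,4)])
  finally show ?thesis using skew_cancel_left[OF assms(1,2) _ hnz] by metis
qed


lemma coeff_skew_monom_left:
  assumes "rhom Th"
  shows "coeff (skew_mult Th (monom 1 i) g) e = (if i \<le> e then (Th ^^ i) (coeff g (e - i)) else 0)"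
  unfolding coeff_skew_mult[OF assms] by (simp add: coeff_monom if_distrib[of "\<lambda>x. x * _"] sum.delta cong: if_cong)

lemma coeff_dagger:
  "coeff (skew_dagger Th h) j = (if j \<le> degree h then (Th ^^ j) (coeff h (degree h - j)) else 0)"
  unfolding skew_dagger_def by (simp add: coeff_sum coeff_monom sum.delta)

lemma degree_dagger: "degree (skew_dagger Th h) \<le> degree h"
  by (rule degree_le) (simp add: coeff_dagger)

definition Fold :: "nat \<Rightarrow> 'a::comm_ring_1 poly \<Rightarrow> 'a poly" where
  "Fold n P = poly_cutoff n P + poly_cutoff n (poly_shift n P)"

lemma coeff_Fold: "coeff (Fold n P) k = (if k < n then coeff P k + coeff P (k + n) else 0)"
  by (simp add: Fold_def coeff_poly_cutoff coeff_poly_shift)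

lemma degree_Fold: "n > 0 \<Longrightarrow> degree (Fold n P) < n"
proof -
  assume "n > 0"
  have "degree (Fold n P) \<le> n - 1"
    by (rule degree_le) (auto simp: coeff_Fold)
  then show ?thesis using \<open>n > 0\<close> by linarith
qed

lemma Fold_decomp:
  assumes "rhom Th" "n > 0" "degree P < 2 * n"
  shows "P = Fold n P + skew_mult Th (poly_shift n P) (xn1 n)"
proof (rule poly_eqI)
  fix k
  show "coeff P k = coeff (Fold n P + skew_mult Th (poly_shift n P) (xn1 n)) k"
  proof (cases "k < n")
    case True then show ?thesis
      by (simp add: coeff_Fold coeff_skew_mult_xn1_right[OF assms(1,2)] coeff_poly_shift)
  next
    case False
    then have "coeff P (k + n) = 0" using assms(3) by (intro coeff_eq_0) linarith
    then show ?thesis using False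
      by (simp add: coeff_Fold coeff_skew_mult_xn1_right[OF assms(1,2)] coeff_poly_shift)
  qed
qed

lemma Fold_in_code:
  fixes P f a e :: "'a::comm_ring_1 poly"
  assumes "rhom Th" "n > 0" "degree P < 2 * n"
    and "P = skew_mult Th a f + skew_mult Th e (xn1 n)"
  shows "map (coeff (Fold n P)) [0..<n] \<in> skew_code_gen Th n f"
proof -
  have "Fold n P = skew_mult Th a f + skew_mult Th (e - poly_shift n P) (xn1 n)"
    using Fold_decomp[OF assms(1-3)] assms(4)
    by (simp add: skew_mult_diff_left[OF assms(1)] algebra_simps)
  then show ?thesis unfolding skew_code_gen_def using degree_Fold[OF assms(2)] by blast
qed

lemma word_dot_nth:
  "length u = n \<Longrightarrow> length w = n \<Longrightarrow> word_dot u w = (\<Sum>t<n. u ! t * w ! t)"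
proof -
  assume "length u = n" "length w = n"
  then have "map2 (*) u w = map (\<lambda>t. u ! t * w ! t) [0..<n]"
    by (intro nth_equalityI) auto
  then show ?thesis unfolding word_dot_def
    by (simp add: sum_set_upt_conv_sum_list_nat[symmetric] atLeast0LessThan)
qed


lemma idx1:
  fixes h :: "'a::comm_ring_1 poly"
  assumes "s = degree h" "s < n" "r < n" "t < n" "i = (r + n - s) mod n"
  shows "(if i \<le> t \<and> t - i \<le> s then coeff h (s - (t - i)) else 0) +
         (if i \<le> t + n \<and> t + n - i \<le> s then coeff h (s - (t + n - i)) else 0)
       = coeff h ((r + n - t) mod n)"
proof -
  have m: "(r + n - t) mod n = (if t \<le> r then r - t else r + n - t)"
  proof (cases "t \<le> r")
    case True
    then have "(r + n - t) mod n = ((r - t) + n) mod n" by (simp add: Nat.add_diff_assoc2)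
    also have "\<dots> = r - t" using assms by simp
    finally show ?thesis using True by simp
  next
    case False then show ?thesis using assms by simp
  qed
  have i: "i = (if s \<le> r then r - s else r + n - s)"
  proof (cases "s \<le> r")
    case True
    then have "(r + n - s) mod n = ((r - s) + n) mod n" by (simp add: Nat.add_diff_assoc2)
    also have "\<dots> = r - s" using assms by simp
    finally show ?thesis using True assms by simp
  next
    case False then show ?thesis using assms by simp
  qed
  have z: "coeff h k = 0" if "k > s" for k using that assms(1) coeff_eq_0 by blast
  show ?thesis
  proof (cases "s \<le> r")
    case sr: True
    show ?thesis
    proof (cases "t \<le> r")
      case True
      then show ?thesis using sr i m assms z[of "r - t"] by (cases "r - s \<le> t") auto
    next
      case False
      then show ?thesis using sr i m assms z[of "r + n - t"] by auto
    qed
  next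
    case sr: False
    show ?thesis
    proof (cases "t \<le> r")
      case True
      then show ?thesis using sr i m assms by auto
    next
      case False
      then show ?thesis using sr i m assms z[of "r + n - t"] by (cases "r + n - s \<le> t") auto
    qed
  qed
qed

lemma idx2:
  fixes h :: "'a::comm_ring_1 poly"
  assumes "degree h < n" "r < n" "t < n"
  shows "(if t \<le> r then coeff h (r - t) else 0) + coeff h (r + n - t) = coeff h ((r + n - t) mod n)"
proof (cases "t \<le> r")
  case True
  then have "(r + n - t) mod n = ((r - t) + n) mod n" by (simp add: Nat.add_diff_assoc2)
  also have "\<dots> = r - t" using assms by simp
  finally have 1: "(r + n - t) mod n = r - t" .
  have "coeff h (r + n - t) = 0" using True assms by (intro coeff_eq_0) linarith
  then show ?thesis using True 1 by simp
next
  case False then show ?thesis using assms by simp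
qed


lemma sum_le_restrict:
  fixes g :: "nat \<Rightarrow> 'a::comm_monoid_add"
  assumes "\<And>t. t \<ge> n \<Longrightarrow> g t = 0"
  shows "(\<Sum>t\<le>k. g t) = (\<Sum>t<n. if t \<le> k then g t else 0)"
proof -
  have "(\<Sum>t\<le>k. g t) = (\<Sum>t\<in>{t. t \<le> k \<and> t < n}. g t)"
    using assms by (intro sum.mono_neutral_right) (auto, meson not_less)
  also have "\<dots> = (\<Sum>t\<in>{t\<in>{..<n}. t \<le> k}. g t)"
    by (rule sum.cong) auto
  also have "\<dots> = (\<Sum>t<n. if t \<le> k then g t else 0)"
    by (rule sum.inter_filter) simp
  finally show ?thesis .
qed

lemma Poly_code_vec:
  assumes "length w = n"
  shows "map (coeff (Poly w)) [0..<n] = w"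
  using assms by (intro nth_equalityI) (auto simp: nth_default_nth)

lemma degree_Poly_less:
  assumes "length w = n" "n > 0"
  shows "degree (Poly w) < n"
proof -
  have "degree (Poly w) \<le> n - 1"
    by (rule degree_le) (use assms in \<open>auto simp: nth_default_def\<close>)
  then show ?thesis using assms by linarith
qed

lemma dual_contained_pos:
  fixes h f c :: "'a::field poly"
  assumes R: "rhom Th" "inj Th" and n: "n > 0" "Th ^^ n = id"
    and fac: "xn1 n = skew_mult Th h f"
    and cond: "skew_mult Th (skew_dagger Th h) h = skew_mult Th c (xn1 n)"
    and df: "degree f > 0"
    and w: "length w = n" "\<forall>u \<in> skew_code_gen Th n f. word_dot u w = 0"
  shows "w \<in> skew_code_gen Th n f"
proof -
  have Rk: "rhom (Th ^^ k)" for k using rhom_funpow[OF R(1)] .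
  have hnz: "h \<noteq> 0" and fnz: "f \<noteq> 0"
    using fac xn1_nonzero[OF n(1), where 'a='a] R(1) by auto
  define s where "s = degree h"
  have "degree (xn1 n :: 'a poly) = s + degree f"
    using fac degree_skew_mult(1)[OF R hnz fnz] s_def by simp
  then have sn: "s + degree f = n" using degree_xn1[OF n(1), where 'a='a] by simp
  with df have sless: "s < n" by linarith
  have fh: "xn1 n = skew_mult Th f h" using central_swap[OF R n fac] .
  have dag: "skew_dagger Th h = skew_mult Th c f"
  proof -
    have "skew_mult Th (skew_dagger Th h) h = skew_mult Th (skew_mult Th c f) h"
      using cond fh by (simp add: skew_mult_assoc[OF R(1)])
    then show ?thesis using skew_cancel_right[OF R _ hnz] by blast
  qed
  define u where "u r = map (\<lambda>t. (Th ^^ t) (coeff h ((r + n - t) mod n))) [0..<n]" for r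
  have ucode: "u r \<in> skew_code_gen Th n f" if r: "r < n" for r
  proof -
    define i where "i = (r + n - s) mod n"
    have il: "i < n" using n(1) i_def by simp
    define Q where "Q = skew_mult Th (monom 1 i) (skew_dagger Th h)"
    have cQ: "coeff Q e = (if i \<le> e \<and> e - i \<le> s then (Th ^^ e) (coeff h (s - (e - i))) else 0)" for e
    proof -
      have "coeff Q e = (if i \<le> e then (Th ^^ i) (coeff (skew_dagger Th h) (e - i)) else 0)"
        unfolding Q_def by (rule coeff_skew_monom_left[OF R(1)])
      also have "\<dots> = (if i \<le> e \<and> e - i \<le> s then (Th ^^ e) (coeff h (s - (e - i))) else 0)"
        by (auto simp: coeff_dagger s_def funpow_add_apply[symmetric] rhom_0[OF Rk])
      finally show ?thesis .
    qed
    have degQ: "degree Q < 2 * n"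
    proof -
      have "degree Q \<le> i + s" by (rule degree_le) (auto simp: cQ)
      then show ?thesis using il sless by linarith
    qed
    have Qeq: "Q = skew_mult Th (skew_mult Th (monom 1 i) c) f + skew_mult Th 0 (xn1 n)"
      unfolding Q_def dag by (simp add: skew_mult_assoc[OF R(1)] R(1))
    have mem: "map (coeff (Fold n Q)) [0..<n] \<in> skew_code_gen Th n f"
      by (rule Fold_in_code[OF R(1) n(1) degQ Qeq])
    have "map (coeff (Fold n Q)) [0..<n] = u r"
    proof (rule nth_equalityI)
      show "length (map (coeff (Fold n Q)) [0..<n]) = length (u r)" by (simp add: u_def)
      fix t assume "t < length (map (coeff (Fold n Q)) [0..<n])"
      then have t: "t < n" by simp
      have thn: "(Th ^^ (t + n)) x = (Th ^^ t) x" for x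
        using n(2) by (simp add: funpow_add_apply)
      have "coeff (Fold n Q) t = coeff Q t + coeff Q (t + n)" using t by (simp add: coeff_Fold)
      also have "\<dots> = (Th ^^ t) ((if i \<le> t \<and> t - i \<le> s then coeff h (s - (t - i)) else 0) +
         (if i \<le> t + n \<and> t + n - i \<le> s then coeff h (s - (t + n - i)) else 0))"
        by (simp add: cQ thn rhom_add[OF Rk] rhom_0[OF Rk])
      also have "\<dots> = (Th ^^ t) (coeff h ((r + n - t) mod n))"
        using idx1[OF s_def sless r t i_def] by simp
      finally show "map (coeff (Fold n Q)) [0..<n] ! t = u r ! t" using t by (simp add: u_def)
    qed
    then show ?thesis using mem by simp
  qed
  define P where "P = skew_mult Th (Poly w) h"
  have dPw: "degree (Poly w) < n" using degree_Poly_less[OF w(1) n(1)] .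
  have degP: "degree P < 2 * n"
  proof -
    have "degree P \<le> (n - 1) + s"
      unfolding P_def by (rule degree_le) (use dPw s_def in \<open>auto intro: coeff_skew_mult_high[OF R(1)]\<close>)
    then show ?thesis using sless by linarith
  qed
  have wz: "nth_default 0 w t = 0" if "t \<ge> n" for t using that w(1) by (simp add: nth_default_def)
  have cP: "coeff P k = (\<Sum>t<n. if t \<le> k then w ! t * (Th ^^ t) (coeff h (k - t)) else 0)" for k
  proof -
    have "coeff P k = (\<Sum>t\<le>k. nth_default 0 w t * (Th ^^ t) (coeff h (k - t)))"
      unfolding P_def by (simp add: coeff_skew_mult[OF R(1)])
    also have "\<dots> = (\<Sum>t<n. if t \<le> k then nth_default 0 w t * (Th ^^ t) (coeff h (k - t)) else 0)"
      by (rule sum_le_restrict) (simp add: wz)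
    also have "\<dots> = (\<Sum>t<n. if t \<le> k then w ! t * (Th ^^ t) (coeff h (k - t)) else 0)"
      using w(1) by (intro sum.cong refl) (simp add: nth_default_nth)
    finally show ?thesis .
  qed
  have FP: "Fold n P = 0"
  proof (rule poly_eqI)
    fix r
    show "coeff (Fold n P) r = coeff 0 r"
    proof (cases "r < n")
      case False then show ?thesis by (simp add: coeff_Fold)
    next
      case r: True
      have "coeff (Fold n P) r = coeff P r + coeff P (r + n)" using r by (simp add: coeff_Fold)
      also have "\<dots> = (\<Sum>t<n. w ! t * (Th ^^ t) ((if t \<le> r then coeff h (r - t) else 0) + coeff h (r + n - t)))"
        unfolding cP sum.distrib[symmetric] by (intro sum.cong refl) (auto simp: rhom_add[OF Rk] rhom_0[OF Rk] distrib_left)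
      also have "\<dots> = (\<Sum>t<n. u r ! t * w ! t)"
      proof (rule sum.cong[OF refl])
        fix t assume "t \<in> {..<n}"
        then have t: "t < n" by simp
        have "(if t \<le> r then coeff h (r - t) else 0) + coeff h (r + n - t) = coeff h ((r + n - t) mod n)"
          by (rule idx2) (use sless s_def r t in auto)
        then show "w ! t * (Th ^^ t) ((if t \<le> r then coeff h (r - t) else 0) + coeff h (r + n - t)) = u r ! t * w ! t"
          using t by (simp add: u_def mult.commute)
      qed
      also have "\<dots> = word_dot (u r) w"
        by (rule word_dot_nth[symmetric]) (simp_all add: u_def w(1))
      also have "\<dots> = 0" using w(2) ucode[OF r] by blast
      finally show ?thesis by simp
    qed
  qed
  have "P = skew_mult Th (poly_shift n P) (xn1 n)"
    using Fold_decomp[OF R(1) n(1) degP] FP by simp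
  also have "\<dots> = skew_mult Th (skew_mult Th (poly_shift n P) f) h"
    by (simp add: fh skew_mult_assoc[OF R(1)])
  finally have "Poly w = skew_mult Th (poly_shift n P) f"
    unfolding P_def using skew_cancel_right[OF R _ hnz] by blast
  then have "Poly w = skew_mult Th (poly_shift n P) f + skew_mult Th 0 (xn1 n)"
    using R(1) by simp
  then have "\<exists>r. w = map (coeff r) [0..<n] \<and> degree r < n \<and> (\<exists>a c. r = skew_mult Th a f + skew_mult Th c (xn1 n))"
    using Poly_code_vec[OF w(1)] dPw by (intro exI[of _ "Poly w"]) auto
  then show ?thesis
    unfolding skew_code_gen_def by simp
qed


lemma dual_contained_zero:
  fixes f :: "'a::field poly"
  assumes R: "rhom Th" "inj Th" and n: "n > 0"
    and fnz: "f \<noteq> 0" and df: "degree f = 0"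
    and w: "length w = n"
  shows "w \<in> skew_code_gen Th n f"
proof -
  have Rk: "rhom (Th ^^ k)" for k using rhom_funpow[OF R(1)] .
  define f0 where "f0 = coeff f 0"
  have f0: "f0 \<noteq> 0" using fnz df f0_def by (metis leading_coeff_0_iff)
  have cf: "coeff f j = (if j = 0 then f0 else 0)" for j
    using df f0_def by (auto intro: coeff_eq_0)
  have tf0: "(Th ^^ k) f0 \<noteq> 0" for k
  proof
    assume "(Th ^^ k) f0 = 0"
    then have "(Th ^^ k) f0 = (Th ^^ k) 0" by (simp add: rhom_0[OF Rk])
    then show False using inj_funpow_rhom[OF R(2), of k] f0 unfolding inj_def by blast
  qed
  define a where "a = Poly (map (\<lambda>k. w ! k / (Th ^^ k) f0) [0..<n])"
  have "skew_mult Th a f = Poly w"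
  proof (rule poly_eqI)
    fix k
    have "coeff (skew_mult Th a f) k = (\<Sum>i\<le>k. coeff a i * (Th ^^ i) (coeff f (k - i)))"
      by (rule coeff_skew_mult[OF R(1)])
    also have "\<dots> = (\<Sum>i\<in>{k}. coeff a i * (Th ^^ i) (coeff f (k - i)))"
      by (rule sum.mono_neutral_right) (auto simp: cf rhom_0[OF Rk])
    also have "\<dots> = coeff a k * (Th ^^ k) f0" by (simp add: cf)
    also have "\<dots> = coeff (Poly w) k"
      using w tf0[of k] by (auto simp: a_def nth_default_def)
    finally show "coeff (skew_mult Th a f) k = coeff (Poly w) k" .
  qed
  then have "Poly w = skew_mult Th a f + skew_mult Th 0 (xn1 n)" using R(1) by simp
  then have "\<exists>r. w = map (coeff r) [0..<n] \<and> degree r < n \<and> (\<exists>a c. r = skew_mult Th a f + skew_mult Th c (xn1 n))"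
    using Poly_code_vec[OF w] degree_Poly_less[OF w n] by (intro exI[of _ "Poly w"]) auto
  then show ?thesis
    unfolding skew_code_gen_def by simp
qed

lemma dual_contained:
  fixes h f c :: "'a::field poly"
  assumes R: "rhom Th" "inj Th" and n: "n > 0" "Th ^^ n = id"
    and fac: "xn1 n = skew_mult Th h f"
    and cond: "right_dvd Th (xn1 n) (skew_mult Th (skew_dagger Th h) h)"
    and w: "length w = n" "\<forall>u \<in> skew_code_gen Th n f. word_dot u w = 0"
  shows "w \<in> skew_code_gen Th n f"
proof (cases "degree f = 0")
  case True
  have "f \<noteq> 0" using fac xn1_nonzero[OF n(1), where 'a='a] R(1) by auto
  then show ?thesis using dual_contained_zero[OF R n(1) _ True w(1)] by blast
next
  case False
  from cond obtain c where "skew_mult Th (skew_dagger Th h) h = skew_mult Th c (xn1 n)"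
    unfolding right_dvd_def by blast
  then show ?thesis using dual_contained_pos[OF R n fac _ _ w] False by blast
qed


definition is_code :: "nat \<Rightarrow> 'a::comm_ring_1 list set \<Rightarrow> bool" where
  "is_code N D \<longleftrightarrow> D \<subseteq> {x. length x = N} \<and> replicate N 0 \<in> D \<and>
     (\<forall>x\<in>D. \<forall>y\<in>D. map2 (+) x y \<in> D) \<and> (\<forall>c. \<forall>x\<in>D. map ((*) c) x \<in> D)"

definition dual :: "nat \<Rightarrow> 'a::comm_ring_1 list set \<Rightarrow> 'a list set" where
  "dual N D = {y. length y = N \<and> (\<forall>x\<in>D. word_dot x y = 0)}"

lemma skew_code_gen_is_code:
  fixes f :: "'a::comm_ring_1 poly"
  assumes R: "rhom Th" and n: "n > 0"
  shows "is_code n (skew_code_gen Th n f)"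
  unfolding is_code_def
proof (intro conjI ballI allI)
  show "skew_code_gen Th n f \<subseteq> {x. length x = n}"
    unfolding skew_code_gen_def by auto
  have "replicate n 0 = map (coeff 0) [0..<n] \<and> degree (0::'a poly) < n \<and>
      (0::'a poly) = skew_mult Th 0 f + skew_mult Th 0 (xn1 n)"
    using n R by (auto intro: nth_equalityI)
  then show "replicate n 0 \<in> skew_code_gen Th n f"
    unfolding skew_code_gen_def by blast
next
  fix x y assume x: "x \<in> skew_code_gen Th n f" and y: "y \<in> skew_code_gen Th n f"
  from x obtain r a c where r: "x = map (coeff r) [0..<n]" "degree r < n"
    "r = skew_mult Th a f + skew_mult Th c (xn1 n)"
    unfolding skew_code_gen_def by blast
  from y obtain r' a' c' where rr: "y = map (coeff r') [0..<n]" "degree r' < n"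
    "r' = skew_mult Th a' f + skew_mult Th c' (xn1 n)"
    unfolding skew_code_gen_def by blast
  have "map2 (+) x y = map (coeff (r + r')) [0..<n]"
    using r rr by (intro nth_equalityI) auto
  moreover have "degree (r + r') < n" using r rr degree_add_le_max[of r r'] by linarith
  moreover have "r + r' = skew_mult Th (a + a') f + skew_mult Th (c + c') (xn1 n)"
    using r rr by (simp add: skew_mult_add_left[OF R] algebra_simps)
  ultimately show "map2 (+) x y \<in> skew_code_gen Th n f"
    unfolding skew_code_gen_def by blast
next
  fix k x assume x: "x \<in> skew_code_gen Th n f"
  from x obtain r a c where r: "x = map (coeff r) [0..<n]" "degree r < n"
    "r = skew_mult Th a f + skew_mult Th c (xn1 n)"
    unfolding skew_code_gen_def by blast
  have "map ((*) k) x = map (coeff (smult k r)) [0..<n]"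
    using r by (intro nth_equalityI) auto
  moreover have "degree (smult k r) < n" using r degree_smult_le[of k r] by linarith
  moreover have "smult k r = skew_mult Th (smult k a) f + skew_mult Th (smult k c) (xn1 n)"
    using r by (simp add: skew_mult_smult_left[OF R] smult_add_right)
  ultimately show "map ((*) k) x \<in> skew_code_gen Th n f"
    unfolding skew_code_gen_def by blast
qed


definition Gv :: "'a::comm_ring_1 ^2^2 \<Rightarrow> 'a \<Rightarrow> 'a \<Rightarrow> 'a list" where
  "Gv M a b = (let v = vector_matrix_mult (vector [a, b]) M in [v $ 1, v $ 2])"

lemma Gv_formula: "Gv M a b = [a * M$1$1 + b * M$2$1, a * M$1$2 + b * M$2$2]"
  unfolding Gv_def Let_def vector_matrix_mult_def by (simp add: sum_2)

lemma gray_pair_Gv: "gray_pair M r = Gv M (R_comp1 r) (R_comp2 r)"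
  unfolding gray_pair_def Gv_def ..

lemma word_dot_Nil [simp]: "word_dot [] ys = 0" "word_dot xs [] = 0"
  by (simp_all add: word_dot_def)

lemma word_dot_Cons [simp]: "word_dot (x # xs) (y # ys) = x * y + word_dot xs ys"
  by (simp add: word_dot_def)

lemma word_dot_append:
  "length a = length c \<Longrightarrow> word_dot (a @ b) (c @ d) = word_dot a c + word_dot b d"
  by (simp add: word_dot_def)

lemma Gv_add: "map2 (+) (Gv M a b) (Gv M a' b') = Gv M (a + a') (b + b')"
  by (simp add: Gv_formula algebra_simps)

lemma Gv_scale: "map ((*) k) (Gv M a b) = Gv M (k * a) (k * b)"
  by (simp add: Gv_formula algebra_simps)

lemma Gv_zero: "Gv M 0 0 = [0, 0]"
  by (simp add: Gv_formula)

lemma Gv_dot: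
  assumes "M ** Finite_Cartesian_Product.transpose M = mat \<gamma>"
  shows "word_dot (Gv M a b) (Gv M c d) = \<gamma> * (a * c + b * d)"
proof -
  have e: "(M ** Finite_Cartesian_Product.transpose M) $ i $ j = (mat \<gamma> :: 'a^2^2) $ i $ j" for i j
    using assms by simp
  have e11: "M$1$1 * M$1$1 + M$1$2 * M$1$2 = \<gamma>"
    using e[of 1 1] by (simp add: matrix_matrix_mult_def transpose_def mat_def sum_2)
  have e22: "M$2$1 * M$2$1 + M$2$2 * M$2$2 = \<gamma>"
    using e[of 2 2] by (simp add: matrix_matrix_mult_def transpose_def mat_def sum_2)
  have e12: "M$1$1 * M$2$1 + M$1$2 * M$2$2 = 0"
    using e[of 1 2] by (simp add: matrix_matrix_mult_def transpose_def mat_def sum_2)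
  have "word_dot (Gv M a b) (Gv M c d) =
     a * c * (M$1$1 * M$1$1 + M$1$2 * M$1$2) + b * d * (M$2$1 * M$2$1 + M$2$2 * M$2$2)
     + (a * d + b * c) * (M$1$1 * M$2$1 + M$1$2 * M$2$2)"
    by (simp add: Gv_formula algebra_simps)
  then show ?thesis using e11 e22 e12 by (simp add: algebra_simps)
qed

lemma vector_2_eta: "vector [x $ 1, x $ 2] = (x :: 'a::zero ^ 2)"
  by (simp add: vec_eq_iff forall_2)

lemma Gv_surj:
  assumes "invertible M"
  shows "\<exists>a b. Gv M a b = [u, v]"
proof -
  obtain N where N: "N ** M = mat 1" using assms unfolding invertible_def by blast
  define x where "x = vector [u, v] v* N"
  have "vector [x $ 1, x $ 2] v* M = vector [u, v]"
    by (simp add: vector_2_eta x_def vector_matrix_mul_assoc N)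
  then have "Gv M (x $ 1) (x $ 2) = [u, v]"
    unfolding Gv_def Let_def by simp
  then show ?thesis by blast
qed

definition Pm :: "'a::comm_ring_1 ^2^2 \<Rightarrow> 'a list \<Rightarrow> 'a list \<Rightarrow> 'a list" where
  "Pm M c1 c2 = concat (map2 (Gv M) c1 c2)"

lemma Pm_Nil [simp]: "Pm M [] c2 = []" "Pm M c1 [] = []"
  by (simp_all add: Pm_def)

lemma Pm_Cons [simp]: "Pm M (a # c1) (b # c2) = Gv M a b @ Pm M c1 c2"
  by (simp add: Pm_def)

lemma length_Gv [simp]: "length (Gv M a b) = 2"
  by (simp add: Gv_formula)

lemma length_Pm: "length c1 = length c2 \<Longrightarrow> length (Pm M c1 c2) = 2 * length c1"
proof (induction c1 arbitrary: c2)
  case Nil then show ?case by simp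
next
  case (Cons a c1)
  then show ?case by (cases c2) auto
qed

lemma Pm_add:
  "length c1 = length c2 \<Longrightarrow> length c1' = length c1 \<Longrightarrow> length c2' = length c1 \<Longrightarrow>
   map2 (+) (Pm M c1 c2) (Pm M c1' c2') = Pm M (map2 (+) c1 c1') (map2 (+) c2 c2')"
proof (induction c1 arbitrary: c2 c1' c2')
  case Nil then show ?case by simp
next
  case (Cons a c1)
  then obtain b c2r where c2: "c2 = b # c2r" by (cases c2) auto
  from Cons obtain a' c1r' where c1': "c1' = a' # c1r'" by (cases c1') auto
  from Cons obtain b' c2r' where c2': "c2' = b' # c2r'" by (cases c2') auto
  have "length (Gv M a b) = length (Gv M a' b')" by simp
  then show ?case using Cons.IH[of c2r c1r' c2r'] Cons.prems c2 c1' c2'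
    by (simp add: zip_append Gv_add[symmetric])
qed

lemma Pm_scale: "map ((*) k) (Pm M c1 c2) = Pm M (map ((*) k) c1) (map ((*) k) c2)"
proof (induction c1 arbitrary: c2)
  case Nil then show ?case by simp
next
  case (Cons a c1)
  then show ?case by (cases c2) (simp_all add: Gv_scale)
qed

lemma Pm_dot:
  assumes "M ** Finite_Cartesian_Product.transpose M = mat \<gamma>"
  shows "length c1 = length c2 \<Longrightarrow> length d1 = length c1 \<Longrightarrow> length d2 = length c1 \<Longrightarrow>
   word_dot (Pm M c1 c2) (Pm M d1 d2) = \<gamma> * (word_dot c1 d1 + word_dot c2 d2)"
proof (induction c1 arbitrary: c2 d1 d2)
  case Nil then show ?case by simp
next
  case (Cons a c1)
  then obtain b c2r where c2: "c2 = b # c2r" by (cases c2) auto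
  from Cons obtain a' d1r where d1: "d1 = a' # d1r" by (cases d1) auto
  from Cons obtain b' d2r where d2: "d2 = b' # d2r" by (cases d2) auto
  show ?case using Cons.IH[of c2r d1r d2r] Cons.prems c2 d1 d2
    by (simp add: word_dot_append Gv_dot[OF assms] algebra_simps)
qed

lemma Pm_surj:
  assumes "invertible M"
  shows "length w = 2 * k \<Longrightarrow> \<exists>d1 d2. length d1 = k \<and> length d2 = k \<and> Pm M d1 d2 = w"
proof (induction k arbitrary: w)
  case 0 then show ?case by simp
next
  case (Suc k)
  then obtain u v w' where w: "w = u # v # w'" and lw: "length w' = 2 * k"
    by (cases w; cases "tl w") auto
  obtain d1 d2 where d: "length d1 = k" "length d2 = k" "Pm M d1 d2 = w'"
    using Suc.IH[OF lw] by blast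
  obtain a b where ab: "Gv M a b = [u, v]" using Gv_surj[OF assms] by blast
  show ?case
    by (rule exI[of _ "a # d1"], rule exI[of _ "b # d2"]) (simp add: d ab w)
qed

lemma Pm_zero: "Pm M (replicate k 0) (replicate k 0) = replicate (2 * k) 0"
  by (induction k) (simp_all add: Gv_zero)


lemma xi_comb_comps:
  "R_comp1 (R_add (R_mult xi1 (R_of a)) (R_mult xi2 (R_of b))) = (a :: 'a::comm_ring_1)"
  "R_comp2 (R_add (R_mult xi1 (R_of a)) (R_mult xi2 (R_of b))) = (b :: 'a::comm_ring_1)"
  by (simp_all add: R_comp1_def R_comp2_def R_add_def R_mult_def xi1_def xi2_def R_of_def)

lemma gray_xi:
  "gray M (x, map2 (\<lambda>a b. R_add (R_mult xi1 (R_of a)) (R_mult xi2 (R_of b))) c1 c2) = x @ Pm M c1 c2"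
proof -
  have h: "map (gray_pair M) (map2 (\<lambda>a b. R_add (R_mult xi1 (R_of a)) (R_mult xi2 (R_of b))) c1 c2)
      = map2 (Gv M) c1 c2"
    unfolding map_map by (rule map_cong[OF refl]) (clarsimp simp: gray_pair_Gv xi_comb_comps)
  show ?thesis unfolding gray_def fst_conv snd_conv h Pm_def ..
qed

lemma gray_image:
  "gray M ` code_tensor A (xi_sum C1 C2) =
     {x @ Pm M c1 c2 | x c1 c2. x \<in> A \<and> c1 \<in> C1 \<and> c2 \<in> C2 \<and> length c1 = length c2}"
proof
  show "gray M ` code_tensor A (xi_sum C1 C2) \<subseteq>
     {x @ Pm M c1 c2 | x c1 c2. x \<in> A \<and> c1 \<in> C1 \<and> c2 \<in> C2 \<and> length c1 = length c2}"
  proof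
    fix z assume "z \<in> gray M ` code_tensor A (xi_sum C1 C2)"
    then obtain x y where z: "z = gray M (x, y)" "x \<in> A" "y \<in> xi_sum C1 C2"
      unfolding code_tensor_def by auto
    then obtain c1 c2 where y: "y = map2 (\<lambda>a b. R_add (R_mult xi1 (R_of a)) (R_mult xi2 (R_of b))) c1 c2"
      "c1 \<in> C1" "c2 \<in> C2" "length c1 = length c2"
      unfolding xi_sum_def by blast
    have "z = x @ Pm M c1 c2" using z y by (simp add: gray_xi)
    then show "z \<in> {x @ Pm M c1 c2 | x c1 c2. x \<in> A \<and> c1 \<in> C1 \<and> c2 \<in> C2 \<and> length c1 = length c2}"
      using z y by blast
  qed
  show "{x @ Pm M c1 c2 | x c1 c2. x \<in> A \<and> c1 \<in> C1 \<and> c2 \<in> C2 \<and> length c1 = length c2}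
     \<subseteq> gray M ` code_tensor A (xi_sum C1 C2)"
  proof
    fix z assume "z \<in> {x @ Pm M c1 c2 | x c1 c2. x \<in> A \<and> c1 \<in> C1 \<and> c2 \<in> C2 \<and> length c1 = length c2}"
    then obtain x c1 c2 where z: "z = x @ Pm M c1 c2" "x \<in> A" "c1 \<in> C1" "c2 \<in> C2" "length c1 = length c2"
      by blast
    define y where "y = map2 (\<lambda>a b. R_add (R_mult xi1 (R_of a)) (R_mult xi2 (R_of b))) c1 c2"
    have "y \<in> xi_sum C1 C2" unfolding xi_sum_def y_def using z by blast
    then have "(x, y) \<in> code_tensor A (xi_sum C1 C2)" unfolding code_tensor_def using z by simp
    moreover have "z = gray M (x, y)" using z by (simp add: y_def gray_xi)
    ultimately show "z \<in> gray M ` code_tensor A (xi_sum C1 C2)" by blast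
  qed
qed

lemma word_dot_zero_left: "word_dot (replicate k 0) w = 0"
proof (induction k arbitrary: w)
  case 0 then show ?case by simp
next
  case (Suc k) then show ?case by (cases w) simp_all
qed

lemma memD: "x \<in> A \<Longrightarrow> c1 \<in> B1 \<Longrightarrow> c2 \<in> B2 \<Longrightarrow> length c1 = length c2 \<Longrightarrow> z = x @ Pm M c1 c2 \<Longrightarrow>
  z \<in> {x @ Pm M c1 c2 | x c1 c2. x \<in> A \<and> c1 \<in> B1 \<and> c2 \<in> B2 \<and> length c1 = length c2}"
  by blast

lemma part1:
  fixes A B1 B2 :: "'a::field list set"
  assumes A: "is_code \<alpha> A" "dual \<alpha> A \<subseteq> A"
    and B1: "is_code \<beta> B1" "dual \<beta> B1 \<subseteq> B1"
    and B2: "is_code \<beta> B2" "dual \<beta> B2 \<subseteq> B2"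
    and M: "M ** Finite_Cartesian_Product.transpose M = mat \<gamma>" "\<gamma> \<noteq> 0" "invertible M"
    and D: "D = {x @ Pm M c1 c2 | x c1 c2. x \<in> A \<and> c1 \<in> B1 \<and> c2 \<in> B2 \<and> length c1 = length c2}"
  shows "is_code (\<alpha> + 2 * \<beta>) D \<and> dual (\<alpha> + 2 * \<beta>) D \<subseteq> D"
proof
  have lA: "length x = \<alpha>" if "x \<in> A" for x using A(1) that unfolding is_code_def by auto
  have lB1: "length x = \<beta>" if "x \<in> B1" for x using B1(1) that unfolding is_code_def by auto
  have lB2: "length x = \<beta>" if "x \<in> B2" for x using B2(1) that unfolding is_code_def by auto
  have zA: "replicate \<alpha> 0 \<in> A" using A(1) unfolding is_code_def by auto
  have zB1: "replicate \<beta> 0 \<in> B1" using B1(1) unfolding is_code_def by auto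
  have zB2: "replicate \<beta> 0 \<in> B2" using B2(1) unfolding is_code_def by auto
  show "is_code (\<alpha> + 2 * \<beta>) D"
    unfolding is_code_def
  proof (intro conjI ballI allI)
    show "D \<subseteq> {x. length x = \<alpha> + 2 * \<beta>}"
      using lA lB1 lB2 by (auto simp: D length_Pm)
    show "replicate (\<alpha> + 2 * \<beta>) 0 \<in> D" unfolding D by (rule memD[OF zA zB1 zB2]) (simp_all add: Pm_zero replicate_add)
  next
    fix u v assume u: "u \<in> D" and v: "v \<in> D"
    from u obtain x c1 c2 where ux: "u = x @ Pm M c1 c2" "x \<in> A" "c1 \<in> B1" "c2 \<in> B2"
      using D by blast
    from v obtain x' c1' c2' where vx: "v = x' @ Pm M c1' c2'" "x' \<in> A" "c1' \<in> B1" "c2' \<in> B2"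
      using D by blast
    have "map2 (+) u v = map2 (+) x x' @ map2 (+) (Pm M c1 c2) (Pm M c1' c2')"
      using ux vx lA by (simp add: zip_append)
    also have "\<dots> = map2 (+) x x' @ Pm M (map2 (+) c1 c1') (map2 (+) c2 c2')"
      using ux vx lB1 lB2 by (simp add: Pm_add)
    moreover have "map2 (+) x x' \<in> A" using A(1) ux vx unfolding is_code_def by blast
    moreover have "map2 (+) c1 c1' \<in> B1" using B1(1) ux vx unfolding is_code_def by blast
    moreover have "map2 (+) c2 c2' \<in> B2" using B2(1) ux vx unfolding is_code_def by blast
    moreover have "length (map2 (+) c1 c1') = length (map2 (+) c2 c2')"
      using ux vx lB1 lB2 by simp
    ultimately show "map2 (+) u v \<in> D" unfolding D by (intro memD) simp_all
  next
    fix k u assume u: "u \<in> D"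
    from u obtain x c1 c2 where ux: "u = x @ Pm M c1 c2" "x \<in> A" "c1 \<in> B1" "c2 \<in> B2"
      using D by blast
    have "map ((*) k) u = map ((*) k) x @ Pm M (map ((*) k) c1) (map ((*) k) c2)"
      using ux by (simp add: Pm_scale)
    moreover have "map ((*) k) x \<in> A" using A(1) ux unfolding is_code_def by blast
    moreover have "map ((*) k) c1 \<in> B1" using B1(1) ux unfolding is_code_def by blast
    moreover have "map ((*) k) c2 \<in> B2" using B2(1) ux unfolding is_code_def by blast
    moreover have "length (map ((*) k) c1) = length (map ((*) k) c2)"
      using ux lB1 lB2 by simp
    ultimately show "map ((*) k) u \<in> D" unfolding D by (intro memD) simp_all
  qed
  show "dual (\<alpha> + 2 * \<beta>) D \<subseteq> D"
  proof
    fix w assume w: "w \<in> dual (\<alpha> + 2 * \<beta>) D"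
    then have lw: "length w = \<alpha> + 2 * \<beta>" and orth: "\<And>u. u \<in> D \<Longrightarrow> word_dot u w = 0"
      unfolding dual_def by auto
    define w1 where "w1 = take \<alpha> w"
    define w2 where "w2 = drop \<alpha> w"
    have w12: "w = w1 @ w2" and lw1: "length w1 = \<alpha>" and lw2: "length w2 = 2 * \<beta>"
      using lw by (simp_all add: w1_def w2_def)
    obtain d1 d2 where d: "length d1 = \<beta>" "length d2 = \<beta>" "Pm M d1 d2 = w2"
      using Pm_surj[OF M(3) lw2] by blast
    have "w1 \<in> dual \<alpha> A"
      unfolding dual_def
    proof (intro CollectI conjI ballI lw1)
      fix x assume x: "x \<in> A"
      have "x @ Pm M (replicate \<beta> 0) (replicate \<beta> 0) \<in> D" unfolding D by (rule memD[OF x zB1 zB2]) simp_all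
      then have "word_dot (x @ Pm M (replicate \<beta> 0) (replicate \<beta> 0)) (w1 @ Pm M d1 d2) = 0"
        using orth w12 d by simp
      then show "word_dot x w1 = 0"
        using lA[OF x] lw1 d by (simp add: word_dot_append Pm_zero word_dot_zero_left)
    qed
    then have w1A: "w1 \<in> A" using A(2) by blast
    have "d1 \<in> dual \<beta> B1"
      unfolding dual_def
    proof (intro CollectI conjI ballI d(1))
      fix x assume x: "x \<in> B1"
      have "replicate \<alpha> 0 @ Pm M x (replicate \<beta> 0) \<in> D" unfolding D by (rule memD[OF zA x zB2]) (simp_all add: lB1[OF x])
      then have "word_dot (replicate \<alpha> 0 @ Pm M x (replicate \<beta> 0)) (w1 @ Pm M d1 d2) = 0"
        using orth w12 d by simp
      then have "\<gamma> * word_dot x d1 = 0"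
        using lB1[OF x] lw1 d(1,2) d(3)[symmetric] by (simp add: word_dot_append Pm_dot[OF M(1)] word_dot_zero_left)
      then show "word_dot x d1 = 0" using M(2) by simp
    qed
    then have d1B: "d1 \<in> B1" using B1(2) by blast
    have "d2 \<in> dual \<beta> B2"
      unfolding dual_def
    proof (intro CollectI conjI ballI d(2))
      fix x assume x: "x \<in> B2"
      have "replicate \<alpha> 0 @ Pm M (replicate \<beta> 0) x \<in> D" unfolding D by (rule memD[OF zA zB1 x]) (simp_all add: lB2[OF x])
      then have "word_dot (replicate \<alpha> 0 @ Pm M (replicate \<beta> 0) x) (w1 @ Pm M d1 d2) = 0"
        using orth w12 d by simp
      then have "\<gamma> * word_dot x d2 = 0"
        using lB2[OF x] lw1 d(1,2) d(3)[symmetric] by (simp add: word_dot_append Pm_dot[OF M(1)] word_dot_zero_left)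
      then show "word_dot x d2 = 0" using M(2) by simp
    qed
    then have d2B: "d2 \<in> B2" using B2(2) by blast
    show "w \<in> D" unfolding D by (rule memD[OF w1A d1B d2B]) (simp_all add: d w12)
  qed
qed


lemma char_eq_p:
  assumes "prime p" "of_nat p = (0 :: 'a::field)"
  shows "CHAR('a) = p"
proof -
  have "CHAR('a) dvd p" using assms(2) by (simp add: of_nat_eq_0_iff_char_dvd)
  moreover have "CHAR('a) \<noteq> 1" using CHAR_not_1'[where 'a='a] by simp
  ultimately show ?thesis using assms(1) unfolding prime_nat_iff by auto
qed

lemma pow_card_same:
  fixes x :: "'a :: {field, finite}"
  shows "x ^ CARD('a) = x"
proof (cases "x = 0")
  case False
  have "x * (\<Prod>y\<in>UNIV-{0}. x * y) = x * x ^ (card (UNIV :: 'a set) - 1) * \<Prod>(UNIV-{0})"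
    by (simp add: prod.distrib mult_ac)
  also have "x * x ^ (card (UNIV :: 'a set) - 1) = x ^ Suc (card (UNIV :: 'a set) - 1)"
    by (subst power_Suc) auto
  also have "Suc (card (UNIV :: 'a set) - 1) = card (UNIV :: 'a set)"
    using finite_UNIV_card_ge_0[where ?'a = 'a] by simp
  also have "(\<Prod>y\<in>UNIV-{0}. x * y) = (\<Prod>y\<in>UNIV-{0}. y)"
    by (rule prod.reindex_bij_witness[of _ "\<lambda>y. y / x" "\<lambda>y. x * y"]) (use False in auto)
  finally show ?thesis
    by simp
qed (use finite_UNIV_card_ge_0[where ?'a = 'a] in auto)

lemma pow_card_pow_same:
  fixes x :: "'a :: {field, finite}"
  shows "x ^ (CARD('a) ^ k) = x"
  by (induction k) (simp_all add: pow_card_same power_mult)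

lemma card_field_ge2: "CARD('a :: {field, finite}) \<ge> 2"
proof -
  have "{0, 1::'a} \<subseteq> UNIV" by simp
  then have "card {0, 1::'a} \<le> CARD('a)" by (intro card_mono) simp_all
  then show ?thesis by simp
qed

locale ffield =
  fixes p m :: nat and TYPE_a :: "'a :: {field, finite} itself"
  assumes p_prime: "prime p" and card_a: "CARD('a) = p ^ m" and char_0: "of_nat p = (0::'a)"
begin

lemma CHAR_a: "CHAR('a) = p" using char_eq_p[OF p_prime char_0] .

lemma m_pos: "m > 0"
proof (rule ccontr)
  assume "\<not> m > 0"
  then have "CARD('a) = 1" using card_a by simp
  then show False using card_field_ge2[where 'a='a] by simp
qed

lemma p_ge2: "p \<ge> 2" using p_prime prime_ge_2_nat by blast

lemma frob_add: "((x::'a) + y) ^ (p ^ k) = x ^ (p ^ k) + y ^ (p ^ k)"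
  by (rule freshmans_dream') (simp_all add: CHAR_a p_prime)

lemma frob_sum: "(sum (f :: 'b \<Rightarrow> 'a) A) ^ (p ^ k) = (\<Sum>x\<in>A. f x ^ (p ^ k))"
  by (rule freshmans_dream_sum') (simp_all add: CHAR_a p_prime)

lemma Th_rhom: "rhom (\<lambda>a::'a. a ^ (p ^ i))"
  unfolding rhom_def by (simp add: frob_add power_mult_distrib)

lemma Th_funpow: "((\<lambda>a::'a. a ^ (p ^ i)) ^^ k) a = a ^ (p ^ (i * k))"
  by (induction k) (simp_all add: power_mult[symmetric] power_add[symmetric] mult.commute)

lemma Th_funpow_m: "(\<lambda>a::'a. a ^ (p ^ i)) ^^ m = id"
proof
  fix a :: 'a
  have "p ^ (i * m) = CARD('a) ^ i" using card_a by (simp add: power_mult[symmetric] mult.commute)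
  then show "((\<lambda>a::'a. a ^ (p ^ i)) ^^ m) a = id a"
    by (simp add: Th_funpow pow_card_pow_same)
qed

lemma inj_of_period:
  fixes T :: "'b \<Rightarrow> 'b"
  assumes "T ^^ k = id" "k > 0"
  shows "inj T"
proof
  fix x y assume "T x = T y"
  then have "(T ^^ (k - 1)) (T x) = (T ^^ (k - 1)) (T y)" by simp
  then have "(T ^^ Suc (k - 1)) x = (T ^^ Suc (k - 1)) y" by (simp only: funpow_Suc_right o_apply)
  then show "x = y" using assms by simp
qed

lemma Th_inj: "inj (\<lambda>a::'a. a ^ (p ^ i))"
  by (rule inj_of_period[OF Th_funpow_m m_pos])

lemma aut_order_period:
  fixes T :: "'b \<Rightarrow> 'b"
  assumes "T ^^ k = id" "k > 0" "aut_order T dvd n"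
  shows "T ^^ n = id"
proof -
  have ex: "\<exists>t. t > 0 \<and> T ^^ t = id" using assms by blast
  have o: "aut_order T > 0 \<and> T ^^ aut_order T = id"
    unfolding aut_order_def by (rule LeastI_ex[OF ex])
  obtain c where "n = aut_order T * c" using assms(3) by blast
  then have "T ^^ n = (T ^^ aut_order T) ^^ c" by (simp add: funpow_mult)
  also have "\<dots> = id" using o by (induction c) simp_all
  finally show ?thesis .
qed

lemma R_theta_funpow: "R_theta T ^^ k = R_theta (T ^^ k)"
  by (induction k) (simp_all add: fun_eq_iff R_theta_def)

lemma R_theta_period:
  fixes T :: "'b \<Rightarrow> 'b"
  assumes "T ^^ k = id" "k > 0" "aut_order (R_theta T) dvd n"
  shows "T ^^ n = id"
proof -
  have "R_theta T ^^ k = id" using assms(1) by (simp add: R_theta_funpow fun_eq_iff R_theta_def)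
  then have "R_theta T ^^ n = id" using aut_order_period assms(2,3) by blast
  then have "R_theta (T ^^ n) = id" by (simp add: R_theta_funpow)
  then show ?thesis by (auto simp: fun_eq_iff R_theta_def)
qed

end


context ffield begin

abbreviation Tr :: "'a \<Rightarrow> 'a" where "Tr z \<equiv> abs_trace p m z"

lemma Tr_add: "Tr (z + w) = Tr z + Tr w"
  unfolding abs_trace_def by (simp add: frob_add sum.distrib)

lemma Tr_0: "Tr 0 = 0"
  unfolding abs_trace_def using p_ge2 by (intro sum.neutral ballI) (simp add: zero_power)

lemma pow_pm: "(z::'a) ^ (p ^ m) = z"
  using pow_card_same[of z] card_a by simp

lemma Tr_pow_p: "Tr z ^ p = Tr z"
proof -
  have "Tr z ^ p = Tr z ^ (p ^ 1)" by simp
  also have "\<dots> = (\<Sum>j<m. (z ^ (p ^ j)) ^ (p ^ 1))"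
    unfolding abs_trace_def by (rule frob_sum)
  also have "\<dots> = (\<Sum>j<m. z ^ (p ^ Suc j))"
    by (simp add: power_mult[symmetric] mult.commute)
  also have "\<dots> = (\<Sum>j<Suc m. z ^ (p ^ j)) - z ^ (p ^ 0)"
    by (simp only: sum.lessThan_Suc_shift add_diff_cancel_left')
  also have "\<dots> = Tr z"
    unfolding abs_trace_def by (simp add: pow_pm)
  finally show ?thesis .
qed

lemma of_nat_pow_p: "(of_nat t :: 'a) ^ p = of_nat t"
proof (induction t)
  case 0 then show ?case using p_ge2 by simp
next
  case (Suc t)
  have "(of_nat (Suc t) :: 'a) ^ p = (of_nat t + 1) ^ (p ^ 1)" by (simp add: add.commute)
  also have "\<dots> = of_nat t ^ p + 1" by (simp only: frob_add) simp
  finally show ?case using Suc by simp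
qed

lemma of_nat_inj_p: "inj_on (of_nat :: nat \<Rightarrow> 'a) {..<p}"
proof
  fix a b assume ab: "a \<in> {..<p}" "b \<in> {..<p}" "(of_nat a :: 'a) = of_nat b"
  show "a = b"
  proof (rule ccontr)
    assume "a \<noteq> b"
    then consider "a < b" | "b < a" by linarith
    then show False
    proof cases
      case 1
      then have "(of_nat (b - a) :: 'a) = 0" using ab by (simp add: of_nat_diff)
      then have "p dvd (b - a)" using CHAR_a by (simp add: of_nat_eq_0_iff_char_dvd)
      moreover have "0 < b - a" "b - a < p" using 1 ab by auto
      ultimately show False using nat_dvd_not_less by blast
    next
      case 2
      then have "(of_nat (a - b) :: 'a) = 0" using ab by (simp add: of_nat_diff)
      then have "p dvd (a - b)" using CHAR_a by (simp add: of_nat_eq_0_iff_char_dvd)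
      moreover have "0 < a - b" "a - b < p" using 2 ab by auto
      ultimately show False using nat_dvd_not_less by blast
    qed
  qed
qed

lemma fixed_p_eq: "{y::'a. y ^ p = y} = of_nat ` {..<p}"
proof -
  define P :: "'a poly" where "P = monom 1 p - [:0, 1:]"
  have degP: "degree P = p"
  proof -
    have "degree [:0, 1::'a:] < degree (monom (1::'a) p)" using p_ge2 by (simp add: degree_monom_eq)
    then have d: "degree (monom (1::'a) p + - [:0, 1:]) = p"
      by (subst degree_add_eq_left) (simp_all add: degree_monom_eq)
    have e: "monom (1::'a) p - [:0, 1:] = monom 1 p + - [:0, 1:]" by (rule diff_conv_add_uminus)
    show ?thesis unfolding P_def e by (rule d)
  qed
  then have Pnz: "P \<noteq> 0" using p_ge2 by auto
  have roots: "{y. poly P y = 0} = {y::'a. y ^ p = y}"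
    by (simp add: P_def poly_monom)
  have c1: "card {y::'a. y ^ p = y} \<le> p"
    using card_poly_roots_bound[OF Pnz] degP roots by simp
  have sub: "of_nat ` {..<p} \<subseteq> {y::'a. y ^ p = y}"
    using of_nat_pow_p by auto
  have c2: "card (of_nat ` {..<p} :: 'a set) = p"
    using card_image[OF of_nat_inj_p] by simp
  have "of_nat ` {..<p} = {y::'a. y ^ p = y}"
    by (rule card_seteq) (use sub c1 c2 in simp_all)
  then show ?thesis by simp
qed

lemma Tr_prime_field: "\<exists>!t. t < p \<and> of_nat t = Tr z"
proof -
  have "Tr z \<in> {y::'a. y ^ p = y}" using Tr_pow_p by simp
  then obtain t where t: "t < p" "of_nat t = Tr z" using fixed_p_eq by auto
  moreover have "t' = t" if "t' < p" "of_nat t' = Tr z" for t'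
    using of_nat_inj_p t that unfolding inj_on_def by auto
  ultimately show ?thesis by blast
qed

definition trn :: "'a \<Rightarrow> nat" where "trn z = (THE t. t < p \<and> of_nat t = Tr z)"

lemma trn: "trn z < p" "of_nat (trn z) = Tr z"
  using theI'[OF Tr_prime_field[of z]] unfolding trn_def by auto

lemma add_char_trn: "add_char p m z = cis (2 * pi * real (trn z) / real p)"
  unfolding add_char_def trn_def ..

lemma trn_unique: "t < p \<Longrightarrow> of_nat t = Tr z \<Longrightarrow> trn z = t"
  using Tr_prime_field[of z] trn[of z] by blast

lemma add_char_0: "add_char p m (0::'a) = 1"
proof -
  have "trn (0::'a) = 0" by (rule trn_unique) (use p_ge2 Tr_0 in auto)
  then show ?thesis by (simp add: add_char_trn)
qed

lemma cis_mod:
  "cis (2 * pi * real a / real p) = cis (2 * pi * real (a mod p) / real p)"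
proof -
  have a: "a = a mod p + p * (a div p)" by simp
  have ra: "real a = real (a mod p) + real p * real (a div p)"
  proof -
    have 1: "real a = real (a mod p + p * (a div p))" by (simp only: mod_mult_div_eq)
    have 2: "real (a mod p + p * (a div p)) = real (a mod p) + real p * real (a div p)"
      by (simp only: of_nat_add of_nat_mult)
    from 1 2 show ?thesis by (rule trans)
  qed
  have "2 * pi * real a / real p = 2 * pi * real (a mod p) / real p + 2 * pi * real (a div p)"
    using p_ge2 by (subst ra) (simp add: field_simps)
  then have "cis (2 * pi * real a / real p) = cis (2 * pi * real (a mod p) / real p + 2 * pi * real (a div p))"
    by (rule arg_cong)
  also have "\<dots> = cis (2 * pi * real (a mod p) / real p) * cis (2 * pi * real (a div p))"
    by (rule cis_mult[symmetric])
  also have "cis (2 * pi * real (a div p)) = 1"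
    using cis_multiple_2pi[of "real (a div p)"] by (simp add: Ints_of_nat)
  finally show ?thesis by simp
qed

lemma add_char_add: "add_char p m ((z::'a) + w) = add_char p m z * add_char p m w"
proof -
  have "(of_nat (trn (z + w)) :: 'a) = of_nat (trn z + trn w)"
    by (simp add: trn Tr_add)
  have e: "trn (z + w) = (trn z + trn w) mod p"
  proof (rule trn_unique)
    show "(trn z + trn w) mod p < p" using p_ge2 by simp
    have "(of_nat ((trn z + trn w) mod p) :: 'a) = of_nat (trn z + trn w)"
    proof -
      define x where "x = trn z + trn w"
      have "(of_nat (x mod p + p * (x div p)) :: 'a) = of_nat (x mod p)"
        by (simp only: of_nat_add of_nat_mult char_0) simp
      then have "(of_nat x :: 'a) = of_nat (x mod p)" by (simp only: mod_mult_div_eq)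
      then show ?thesis unfolding x_def by simp
    qed
    then show "of_nat ((trn z + trn w) mod p) = Tr (z + w)" by (simp add: trn Tr_add)
  qed
  have "add_char p m z * add_char p m w = cis (2 * pi * real (trn z + trn w) / real p)"
    by (simp add: add_char_trn cis_mult add_divide_distrib distrib_left)
  also have "\<dots> = cis (2 * pi * real ((trn z + trn w) mod p) / real p)"
    by (rule cis_mod)
  also have "\<dots> = add_char p m (z + w)"
    by (simp only: e add_char_trn)
  finally show ?thesis by simp
qed

end


context ffield begin

lemma Tr_nonzero_exists: "\<exists>z::'a. Tr z \<noteq> 0"
proof (rule ccontr)
  assume "\<not> (\<exists>z::'a. Tr z \<noteq> 0)"
  then have all: "Tr z = 0" for z :: 'a by blast
  define TP :: "'a poly" where "TP = (\<Sum>j<m. monom 1 (p ^ j))"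
  have pTP: "poly TP z = Tr z" for z
    by (simp add: TP_def poly_sum poly_monom abs_trace_def)
  have inj: "p ^ j = p ^ k \<longleftrightarrow> j = k" for j k using p_ge2 by (simp add: power_inject_exp)
  have cTP: "coeff TP k = (\<Sum>j<m. if p ^ j = k then 1 else 0)" for k
    by (simp add: TP_def coeff_sum coeff_monom)
  have "coeff TP (p ^ (m - 1)) = (\<Sum>j\<in>{m - 1}. 1)"
    unfolding cTP inj using m_pos by (intro sum.mono_neutral_cong_right) auto
  then have "coeff TP (p ^ (m - 1)) = 1" by simp
  then have TPnz: "TP \<noteq> 0" by auto
  have "degree TP \<le> p ^ (m - 1)"
  proof (rule degree_le, intro allI impI)
    fix k assume k: "p ^ (m - 1) < k"
    have "p ^ j \<noteq> k" if "j < m" for j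
    proof -
      have "p ^ j \<le> p ^ (m - 1)" using that p_ge2 by (intro power_increasing) auto
      then show ?thesis using k by linarith
    qed
    then show "coeff TP k = 0" unfolding cTP by (intro sum.neutral) auto
  qed
  moreover have "card {z. poly TP z = 0} \<le> degree TP" by (rule card_poly_roots_bound[OF TPnz])
  moreover have "{z. poly TP z = 0} = (UNIV :: 'a set)" using all pTP by auto
  ultimately have "CARD('a) \<le> p ^ (m - 1)" by simp
  moreover have "p ^ (m - 1) < p ^ m" using p_ge2 m_pos by (intro power_strict_increasing) auto
  ultimately show False using card_a by simp
qed

lemma add_char_nontrivial: "\<exists>z::'a. add_char p m z \<noteq> 1"
proof -
  obtain z :: 'a where z: "Tr z \<noteq> 0" using Tr_nonzero_exists by blast
  have t0: "trn z \<noteq> 0"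
  proof
    assume "trn z = 0"
    then have "Tr z = 0" using trn(2)[of z] by simp
    then show False using z by simp
  qed
  have tp: "trn z < p" using trn(1) .
  define x where "x = 2 * pi * real (trn z) / real p"
  have x0: "0 < x" using t0 p_ge2 by (simp add: x_def)
  have x2: "x < 2 * pi"
  proof -
    have "real (trn z) / real p < 1" using tp p_ge2 by simp
    then have "2 * pi * (real (trn z) / real p) < 2 * pi * 1" by (intro mult_strict_left_mono) auto
    then show ?thesis by (simp add: x_def)
  qed
  have "cis x \<noteq> 1"
  proof
    assume "cis x = 1"
    then have "cos x = 1" using cis.sel(1)[of x] by simp
    then obtain n :: int where n: "x = real_of_int n * 2 * pi" using cos_one_2pi_int by blast
    have "0 < real_of_int n" using x0 n by (simp add: zero_less_mult_iff)
    moreover have "real_of_int n < 1" using x2 n by simp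
    ultimately have "0 < n" "n < 1" by simp_all
    then show False by simp
  qed
  then have "add_char p m z \<noteq> 1" using add_char_trn[of z] x_def by simp
  then show ?thesis by blast
qed

end


abbreviation vadd :: "'a::comm_ring_1 list \<Rightarrow> 'a list \<Rightarrow> 'a list" where
  "vadd x y \<equiv> map2 (+) x y"
abbreviation vsc :: "'a::comm_ring_1 \<Rightarrow> 'a list \<Rightarrow> 'a list" where
  "vsc c x \<equiv> map ((*) c) x"

lemma vadd_assoc: "length x = length y \<Longrightarrow> length y = length z \<Longrightarrow>
  vadd (vadd x y) z = vadd x (vadd y z)"
  by (intro nth_equalityI) (auto simp: add.assoc)

lemma vadd_comm: "vadd x y = vadd y x"
  by (intro nth_equalityI) (auto simp: add.commute)

lemma vadd_zero: "length x = N \<Longrightarrow> vadd x (replicate N 0) = x"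
  by (intro nth_equalityI) auto

lemma vadd_cancel: "length x = length t \<Longrightarrow> vadd (vadd x t) (vsc (-1) t) = x"
  by (intro nth_equalityI) auto

lemma vadd_cancel2: "length x = length t \<Longrightarrow> vadd (vadd x (vsc (-1) t)) t = x"
  by (intro nth_equalityI) auto

lemma vsub_conv: "length y = length a \<Longrightarrow> map2 (-) y a = vadd y (vsc (-1) a)"
  by (intro nth_equalityI) auto

lemma vsub_vsub: "length (y :: 'a::comm_ring_1 list) = length a \<Longrightarrow> map2 (-) y (map2 (-) y a) = a"
  by (intro nth_equalityI) auto

lemma vsub_zero: "length (y :: 'a::comm_ring_1 list) = N \<Longrightarrow> map2 (-) y (replicate N 0) = y"
  by (intro nth_equalityI) auto

lemma word_dot_comm: "word_dot x y = word_dot y (x :: 'a::comm_ring_1 list)"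
proof (induction x arbitrary: y)
  case Nil then show ?case by simp
next
  case (Cons a x)
  then show ?case by (cases y) (auto simp: mult.commute)
qed

lemma word_dot_vadd_right: "length y = length z \<Longrightarrow>
  word_dot x (vadd y z) = word_dot x y + word_dot x z"
proof (induction x arbitrary: y z)
  case Nil then show ?case by simp
next
  case (Cons a x)
  then show ?case by (cases y; cases z) (auto simp: algebra_simps)
qed

lemma word_dot_vsc_right: "word_dot x (vsc c y) = c * word_dot x y"
proof (induction x arbitrary: y)
  case Nil then show ?case by simp
next
  case (Cons a x)
  then show ?case by (cases y) (auto simp: algebra_simps)
qed

lemma word_dot_zero_right: "word_dot x (replicate N 0) = 0"
  by (subst word_dot_comm) (rule word_dot_zero_left)

lemma is_code_len: "is_code N V \<Longrightarrow> x \<in> V \<Longrightarrow> length x = N"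
  unfolding is_code_def by auto
lemma is_code_zero: "is_code N V \<Longrightarrow> replicate N 0 \<in> V"
  unfolding is_code_def by auto
lemma is_code_add: "is_code N V \<Longrightarrow> x \<in> V \<Longrightarrow> y \<in> V \<Longrightarrow> vadd x y \<in> V"
  unfolding is_code_def by auto
lemma is_code_sc: "is_code N V \<Longrightarrow> x \<in> V \<Longrightarrow> vsc c x \<in> V"
  unfolding is_code_def by auto
lemma is_code_sub: "is_code N V \<Longrightarrow> x \<in> V \<Longrightarrow> y \<in> V \<Longrightarrow> map2 (-) x y \<in> V"
proof -
  assume a: "is_code N V" "x \<in> V" "y \<in> V"
  then have "map2 (-) x y = vadd x (vsc (-1) y)" using is_code_len[OF a(1,2)] is_code_len[OF a(1,3)] by (intro vsub_conv) simp
  moreover have "vadd x (vsc (-1) y) \<in> V" using a by (intro is_code_add is_code_sc)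
  ultimately show ?thesis by simp
qed

lemma finite_words: "finite {x :: 'a::finite list. length x = N}"
proof -
  have "{x :: 'a list. length x = N} = {x. set x \<subseteq> UNIV \<and> length x = N}" by simp
  then show ?thesis using finite_lists_length_eq[of "UNIV :: 'a set" N] by simp
qed

lemma card_words: "card {x :: 'a::finite list. length x = N} = CARD('a) ^ N"
proof -
  have "{x :: 'a list. length x = N} = {x. set x \<subseteq> UNIV \<and> length x = N}" by simp
  then show ?thesis using card_lists_length_eq[of "UNIV :: 'a set" N] by simp
qed

lemma is_code_finite: "is_code N (V :: 'a::{comm_ring_1,finite} list set) \<Longrightarrow> finite V"
  using finite_subset[OF _ finite_words] unfolding is_code_def by blast

lemma words_is_code: "is_code N {x :: 'a::comm_ring_1 list. length x = N}"
  unfolding is_code_def by auto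

lemma dual_is_code: "is_code N (dual N V)"
  unfolding is_code_def dual_def
proof (intro conjI ballI allI)
  show "replicate N 0 \<in> {y. length y = N \<and> (\<forall>x\<in>V. word_dot x y = 0)}"
    by (simp add: word_dot_zero_right)
next
  fix x y assume x: "x \<in> {y. length y = N \<and> (\<forall>x\<in>V. word_dot x y = 0)}"
    and y: "y \<in> {y. length y = N \<and> (\<forall>x\<in>V. word_dot x y = 0)}"
  show "vadd x y \<in> {y. length y = N \<and> (\<forall>x\<in>V. word_dot x y = 0)}"
  proof (intro CollectI conjI ballI)
    show "length (vadd x y) = N" using x y by simp
    fix v assume v: "v \<in> V"
    have "word_dot (vadd x y) v = word_dot v (vadd x y)" by (rule word_dot_comm)
    also have "\<dots> = word_dot v x + word_dot v y"
      using x y by (intro word_dot_vadd_right) auto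
    also have "\<dots> = 0" using x y v by auto
    finally show "word_dot v (vadd x y) = 0" by (simp add: word_dot_comm)
  qed
next
  fix c x assume x: "x \<in> {y. length y = N \<and> (\<forall>x\<in>V. word_dot x y = 0)}"
  show "vsc c x \<in> {y. length y = N \<and> (\<forall>x\<in>V. word_dot x y = 0)}"
  proof (intro CollectI conjI ballI)
    show "length (vsc c x) = N" using x by simp
    fix v assume v: "v \<in> V"
    have "word_dot v (vsc c x) = c * word_dot v x"
      by (rule word_dot_vsc_right)
    then show "word_dot v (vsc c x) = 0" using x v by simp
  qed
qed auto


context ffield begin

abbreviation chi :: "'a \<Rightarrow> complex" where "chi z \<equiv> add_char p m z"

lemma char_sum_zero:
  assumes V: "is_code N (V :: 'a list set)" and b: "length b = N" and s0: "s0 \<in> V"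
    and nz: "word_dot b s0 \<noteq> 0"
  shows "(\<Sum>s\<in>V. chi (word_dot b s)) = 0"
proof -
  obtain z0 :: 'a where z0: "chi z0 \<noteq> 1" using add_char_nontrivial by blast
  define t where "t = vsc (z0 / word_dot b s0) s0"
  have tV: "t \<in> V" unfolding t_def by (rule is_code_sc[OF V s0])
  have bt: "word_dot b t = z0" unfolding t_def using nz by (simp add: word_dot_vsc_right)
  have lt: "length t = N" using is_code_len[OF V tV] .
  define S where "S = (\<Sum>s\<in>V. chi (word_dot b s))"
  have "S = (\<Sum>s\<in>V. chi (word_dot b (vadd s t)))"
    unfolding S_def
  proof (rule sum.reindex_bij_witness[of V "\<lambda>s. vadd s t" "\<lambda>s. vadd s (vsc (-1) t)"])
    fix a assume a: "a \<in> V"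
    have la: "length a = N" using is_code_len[OF V a] .
    show "vadd (vadd a (vsc (-1) t)) t = a" using la lt by (simp add: vadd_cancel2)
    show "vadd a (vsc (-1) t) \<in> V" using a tV V by (intro is_code_add is_code_sc)
    show "chi (word_dot b (vadd (vadd a (vsc (-1) t)) t)) = chi (word_dot b a)"
      using la lt by (simp add: vadd_cancel2)
  next
    fix a assume a: "a \<in> V"
    have la: "length a = N" using is_code_len[OF V a] .
    show "vadd (vadd a t) (vsc (-1) t) = a" using la lt by (simp add: vadd_cancel)
    show "vadd a t \<in> V" using a tV V by (intro is_code_add)
  qed
  also have "\<dots> = (\<Sum>s\<in>V. chi (word_dot b s) * chi z0)"
  proof (rule sum.cong[OF refl])
    fix s assume s: "s \<in> V"
    have "word_dot b (vadd s t) = word_dot b s + z0"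
      using is_code_len[OF V s] lt bt by (simp add: word_dot_vadd_right)
    then show "chi (word_dot b (vadd s t)) = chi (word_dot b s) * chi z0"
      by (simp add: add_char_add)
  qed
  also have "\<dots> = S * chi z0" unfolding S_def by (simp add: sum_distrib_right)
  finally have "S * (1 - chi z0) = 0" by (simp add: algebra_simps)
  then show ?thesis using z0 unfolding S_def by simp
qed

lemma char_sum_dual:
  assumes "b \<in> dual N V"
  shows "(\<Sum>s\<in>V. chi (word_dot b s)) = of_nat (card V)"
proof -
  have "word_dot b s = 0" if "s \<in> V" for s
    using assms that unfolding dual_def by (auto simp: word_dot_comm)
  then show ?thesis by (simp add: add_char_0)
qed

lemma unit_vec_dot:
  assumes "length s = N" "k < N"
  shows "word_dot s ((replicate N 0)[k := 1]) = s ! k"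
proof -
  have "word_dot s ((replicate N 0)[k := 1]) = (\<Sum>i<N. s ! i * (replicate N 0)[k := 1] ! i)"
    using assms by (intro word_dot_nth) auto
  also have "\<dots> = (\<Sum>i<N. if i = k then s ! i else 0)"
    by (intro sum.cong refl) (auto simp: nth_list_update)
  also have "\<dots> = s ! k" using assms by simp
  finally show ?thesis .
qed

lemma count_dual:
  assumes V: "is_code N (V :: 'a list set)"
  shows "card V * card (dual N V) = CARD('a) ^ N"
proof -
  define U where "U = {x :: 'a list. length x = N}"
  have fU: "finite U" unfolding U_def by (rule finite_words)
  have fV: "finite V" by (rule is_code_finite[OF V])
  have DU: "dual N V \<subseteq> U" unfolding U_def dual_def by auto
  have "(\<Sum>b\<in>U. \<Sum>s\<in>V. chi (word_dot b s)) = (\<Sum>b\<in>U. if b \<in> dual N V then of_nat (card V) else 0)"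
  proof (rule sum.cong[OF refl])
    fix b assume b: "b \<in> U"
    show "(\<Sum>s\<in>V. chi (word_dot b s)) = (if b \<in> dual N V then of_nat (card V) else 0)"
    proof (cases "b \<in> dual N V")
      case True then show ?thesis by (simp add: char_sum_dual)
    next
      case False
      then obtain s0 where s0: "s0 \<in> V" "word_dot s0 b \<noteq> 0"
        using b unfolding dual_def U_def by auto
      then have "word_dot b s0 \<noteq> 0" by (simp add: word_dot_comm)
      then show ?thesis using False char_sum_zero[OF V _ s0(1)] b unfolding U_def by simp
    qed
  qed
  also have "\<dots> = (\<Sum>b\<in>dual N V. of_nat (card V))"
    using DU fU by (intro sum.mono_neutral_cong_right) auto
  also have "\<dots> = of_nat (card V * card (dual N V))" by simp
  finally have 1: "(\<Sum>b\<in>U. \<Sum>s\<in>V. chi (word_dot b s)) = of_nat (card V * card (dual N V))" .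
  have "(\<Sum>b\<in>U. \<Sum>s\<in>V. chi (word_dot b s)) = (\<Sum>s\<in>V. \<Sum>b\<in>U. chi (word_dot b s))"
    by (rule sum.swap)
  also have "\<dots> = (\<Sum>s\<in>V. if s = replicate N 0 then of_nat (card U) else 0)"
  proof (rule sum.cong[OF refl])
    fix s assume s: "s \<in> V"
    have ls: "length s = N" using is_code_len[OF V s] .
    show "(\<Sum>b\<in>U. chi (word_dot b s)) = (if s = replicate N 0 then of_nat (card U) else 0)"
    proof (cases "s = replicate N 0")
      case True then show ?thesis by (simp add: word_dot_zero_right add_char_0)
    next
      case False
      then obtain k where k: "k < N" "s ! k \<noteq> 0"
        using ls by (metis length_replicate nth_equalityI nth_replicate)
      define e where "e = (replicate N 0)[k := (1::'a)]"
      have eU: "e \<in> U" unfolding U_def e_def by simp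
      have "word_dot s e \<noteq> 0" unfolding e_def using unit_vec_dot[OF ls k(1)] k(2) by simp
      then have "(\<Sum>b\<in>U. chi (word_dot s b)) = 0"
        using char_sum_zero[OF words_is_code ls] eU unfolding U_def by blast
      then show ?thesis using False by (simp add: word_dot_comm)
    qed
  qed
  also have "\<dots> = of_nat (card U)"
    using is_code_zero[OF V] fV by (simp add: sum.delta)
  finally have "of_nat (card V * card (dual N V)) = (of_nat (card U) :: complex)" using 1 by simp
  then have "card V * card (dual N V) = card U" by (simp only: of_nat_eq_iff)
  then show ?thesis unfolding U_def by (simp add: card_words)
qed

end


lemma vs_fun: "vector_space (\<lambda>(c::'a::field) (v::'b \<Rightarrow> 'a). (\<lambda>i. c * v i))"
  by unfold_locales (auto simp: fun_eq_iff algebra_simps)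

lemma word_fun_vadd: "length x = length y \<Longrightarrow> word_fun (vadd x y) = word_fun x + word_fun y"
  by (auto simp: word_fun_def fun_eq_iff)

lemma word_fun_vsc: "word_fun (vsc c x) = (\<lambda>i. c * word_fun x i)"
  by (auto simp: word_fun_def fun_eq_iff)

lemma word_fun_zero: "word_fun (replicate N 0) = 0"
  by (auto simp: word_fun_def fun_eq_iff)

lemma word_fun_inj: "inj_on word_fun {x :: 'a::zero list. length x = N}"
proof
  fix x y :: "'a list" assume x: "x \<in> {x. length x = N}" and y: "y \<in> {x. length x = N}"
    and e: "word_fun x = word_fun y"
  show "x = y"
  proof (rule nth_equalityI)
    show "length x = length y" using x y by simp
    fix i assume "i < length x"
    then show "x ! i = y ! i" using fun_cong[OF e, of i] x y by (simp add: word_fun_def)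
  qed
qed

lemma sum_fun_apply: "(\<Sum>v\<in>B. (f v :: 'b \<Rightarrow> 'c::comm_monoid_add)) i = (\<Sum>v\<in>B. f v i)"
  by (induction B rule: infinite_finite_induct) auto

lemma card_span_indep:
  fixes B :: "('b \<Rightarrow> 'a::{field,finite}) set"
  assumes fB: "finite B" and ind: "module.independent (\<lambda>c v. (\<lambda>i. c * v i)) B"
  shows "card (module.span (\<lambda>c v. (\<lambda>i. c * v i)) B) = CARD('a) ^ card B"
proof -
  interpret vs: vector_space "\<lambda>c v. (\<lambda>i. c * v i) :: 'b \<Rightarrow> 'a" by (rule vs_fun)
  define F where "F u = (\<Sum>v\<in>B. (\<lambda>i. u v * v i))" for u :: "('b \<Rightarrow> 'a) \<Rightarrow> 'a"
  have sp: "vs.span B = range F" unfolding F_def by (rule vs.span_finite[OF fB])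
  have rng: "range F = F ` (B \<rightarrow>\<^sub>E UNIV)"
  proof
    show "range F \<subseteq> F ` (B \<rightarrow>\<^sub>E UNIV)"
    proof
      fix y assume "y \<in> range F"
      then obtain u where y: "y = F u" by blast
      have "F u = F (restrict u B)" unfolding F_def by (intro sum.cong) auto
      moreover have "restrict u B \<in> B \<rightarrow>\<^sub>E UNIV" by simp
      ultimately show "y \<in> F ` (B \<rightarrow>\<^sub>E UNIV)" using y by blast
    qed
  qed auto
  have inj: "inj_on F (B \<rightarrow>\<^sub>E UNIV)"
  proof
    fix u u' assume u: "u \<in> B \<rightarrow>\<^sub>E UNIV" and u': "u' \<in> B \<rightarrow>\<^sub>E UNIV" and e: "F u = F u'"
    have z: "(\<Sum>v\<in>B. (\<lambda>i. (u v - u' v) * v i)) = 0"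
    proof
      fix i
      have "(\<Sum>v\<in>B. (\<lambda>i. (u v - u' v) * v i)) i = (\<Sum>v\<in>B. (u v - u' v) * v i)" by (rule sum_fun_apply)
      also have "\<dots> = (\<Sum>v\<in>B. u v * v i) - (\<Sum>v\<in>B. u' v * v i)"
        by (simp add: left_diff_distrib sum_subtractf)
      also have "\<dots> = F u i - F u' i" unfolding F_def by (simp add: sum_fun_apply)
      also have "\<dots> = 0" using e by simp
      finally show "(\<Sum>v\<in>B. (\<lambda>i. (u v - u' v) * v i)) i = 0 i" by simp
    qed
    have H: "\<forall>S\<subseteq>B. finite S \<longrightarrow> (\<forall>w. (\<Sum>v\<in>S. (\<lambda>i. w v * v i)) = 0 \<longrightarrow> (\<forall>v\<in>S. w v = 0))"
      using ind unfolding vs.independent_explicit_finite_subsets .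
    have "\<forall>v\<in>B. u v - u' v = 0"
      using H[rule_format, OF subset_refl fB z] by blast
    then show "u = u'" using u u' by (intro extensionalityI[of _ B]) (auto simp: PiE_def)
  qed
  have "card (vs.span B) = card (B \<rightarrow>\<^sub>E (UNIV :: 'a set))" using sp rng card_image[OF inj] by simp
  also have "\<dots> = CARD('a) ^ card B" by (simp add: card_PiE fB)
  finally show ?thesis .
qed


lemma card_code_dim:
  assumes D: "is_code N (D :: 'a::{field,finite} list set)"
  shows "card D = CARD('a) ^ code_dim D"
proof -
  interpret vs: vector_space "\<lambda>c v. (\<lambda>i. c * v i) :: nat \<Rightarrow> 'a" by (rule vs_fun)
  define D' where "D' = word_fun ` D"
  have fD: "finite D" by (rule is_code_finite[OF D])
  have sub: "vs.subspace D'"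
    unfolding vs.subspace_def D'_def
  proof (intro conjI ballI allI)
    have "word_fun (replicate N 0) \<in> word_fun ` D" using is_code_zero[OF D] by (rule imageI)
    then show "0 \<in> word_fun ` D" by (simp only: word_fun_zero)
  next
    fix x y assume "x \<in> word_fun ` D" "y \<in> word_fun ` D"
    then obtain x0 y0 where xy: "x0 \<in> D" "y0 \<in> D" "x = word_fun x0" "y = word_fun y0" by blast
    have "length x0 = length y0" using xy is_code_len[OF D] by simp
    then have "x + y = word_fun (vadd x0 y0)" using xy by (simp add: word_fun_vadd)
    moreover have "vadd x0 y0 \<in> D" using is_code_add[OF D xy(1,2)] .
    ultimately show "x + y \<in> word_fun ` D" by (rule image_eqI)
  next
    fix c x assume "x \<in> word_fun ` D"
    then obtain x0 where x: "x0 \<in> D" "x = word_fun x0" by blast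
    then have "(\<lambda>i. c * x i) = word_fun (vsc c x0)" by (simp add: word_fun_vsc)
    moreover have "vsc c x0 \<in> D" using is_code_sc[OF D x(1)] .
    ultimately show "(\<lambda>i. c * x i) \<in> word_fun ` D" by (rule image_eqI)
  qed
  obtain B where B: "B \<subseteq> D'" "vs.independent B" "D' \<subseteq> vs.span B" "card B = vs.dim D'"
    using vs.basis_exists by blast
  have "finite D'" unfolding D'_def using fD by simp
  then have fB: "finite B" using B(1) finite_subset by blast
  have "vs.span B \<subseteq> vs.span D'" using B(1) by (rule vs.span_mono)
  also have "\<dots> = D'" using sub by simp
  finally have spB: "vs.span B = D'" using B(3) by blast
  have "card D' = card D"
    unfolding D'_def
  proof (rule card_image)
    have "D \<subseteq> {x. length x = N}" using is_code_len[OF D] by blast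
    then show "inj_on word_fun D" using inj_on_subset[OF word_fun_inj[of N]] by blast
  qed
  moreover have "card D' = CARD('a) ^ vs.dim D'"
    using card_span_indep[OF fB B(2)] spB B(4) by simp
  moreover have "code_dim D = vs.dim D'" unfolding code_dim_def D'_def ..
  ultimately show ?thesis by simp
qed


locale cssq = ffield p m "TYPE('a::{field,finite})" for p m +
  fixes N :: nat and D :: "'a::{field,finite} list set"
  assumes D: "is_code N D" and DD: "dual N D \<subseteq> D"
begin

abbreviation Dp where "Dp \<equiv> dual N D"

lemma Dp_code: "is_code N Dp" by (rule dual_is_code)

lemma lenD: "x \<in> D \<Longrightarrow> length x = N" using is_code_len[OF D] .
lemma lenDp: "x \<in> Dp \<Longrightarrow> length x = N" using is_code_len[OF Dp_code] .

definition cos :: "'a list \<Rightarrow> 'a list set" where "cos x = (\<lambda>s. vadd x s) ` Dp"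
definition Cos :: "'a list set set" where "Cos = cos ` D"

lemma cos_sub: "x \<in> D \<Longrightarrow> cos x \<subseteq> D"
  unfolding cos_def using DD is_code_add[OF D] by blast

lemma self_in_cos: "x \<in> D \<Longrightarrow> x \<in> cos x"
proof -
  assume x: "x \<in> D"
  have "vadd x (replicate N 0) = x" using lenD[OF x] by (rule vadd_zero)
  moreover have "replicate N 0 \<in> Dp" using is_code_zero[OF Dp_code] .
  ultimately show ?thesis unfolding cos_def by (metis image_eqI)
qed

lemma cos_eq:
  assumes x: "x \<in> D" and y: "y \<in> cos x"
  shows "cos y = cos x"
proof -
  obtain s0 where s0: "s0 \<in> Dp" "y = vadd x s0" using y unfolding cos_def by blast
  have lx: "length x = N" using lenD[OF x] .
  have ls0: "length s0 = N" using lenDp[OF s0(1)] .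
  show ?thesis
  proof
    show "cos y \<subseteq> cos x"
    proof
      fix z assume "z \<in> cos y"
      then obtain s where s: "s \<in> Dp" "z = vadd y s" unfolding cos_def by blast
      have ls: "length s = N" using lenDp[OF s(1)] .
      have "z = vadd x (vadd s0 s)" using s s0 lx ls0 ls by (simp add: vadd_assoc)
      moreover have "vadd s0 s \<in> Dp" using is_code_add[OF Dp_code s0(1) s(1)] .
      ultimately show "z \<in> cos x" unfolding cos_def by blast
    qed
  next
    show "cos x \<subseteq> cos y"
    proof
      fix z assume "z \<in> cos x"
      then obtain s where s: "s \<in> Dp" "z = vadd x s" unfolding cos_def by blast
      have ls: "length s = N" using lenDp[OF s(1)] .
      have "z = vadd y (vadd s (vsc (-1) s0))"
        using s s0 lx ls0 ls by (intro nth_equalityI) auto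
      moreover have "vadd s (vsc (-1) s0) \<in> Dp"
        using is_code_add[OF Dp_code s(1) is_code_sc[OF Dp_code s0(1)]] .
      ultimately show "z \<in> cos y" unfolding cos_def by blast
    qed
  qed
qed

lemma card_cos: "x \<in> D \<Longrightarrow> card (cos x) = card Dp"
  unfolding cos_def
proof (rule card_image, rule inj_onI)
  fix s s' assume x: "x \<in> D" and s: "s \<in> Dp" and s': "s' \<in> Dp" and e: "vadd x s = vadd x s'"
  show "s = s'"
  proof (rule nth_equalityI)
    show "length s = length s'" using lenDp[OF s] lenDp[OF s'] by simp
    fix i assume i: "i < length s"
    have "vadd x s ! i = vadd x s' ! i" using e by simp
    then show "s ! i = s' ! i" using i lenD[OF x] lenDp[OF s] lenDp[OF s'] by simp
  qed
qed

lemma cos_disjoint: "A \<in> Cos \<Longrightarrow> B \<in> Cos \<Longrightarrow> A \<noteq> B \<Longrightarrow> A \<inter> B = {}"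
proof (rule ccontr)
  assume A: "A \<in> Cos" and B: "B \<in> Cos" and ne: "A \<noteq> B" and "A \<inter> B \<noteq> {}"
  then obtain z where z: "z \<in> A" "z \<in> B" by blast
  obtain x where x: "x \<in> D" "A = cos x" using A unfolding Cos_def by blast
  obtain y where y: "y \<in> D" "B = cos y" using B unfolding Cos_def by blast
  have "cos z = cos x" using cos_eq[OF x(1)] z x by simp
  moreover have "cos z = cos y" using cos_eq[OF y(1)] z y by simp
  ultimately show False using ne x y by simp
qed

lemma Union_Cos: "\<Union>Cos = D"
  unfolding Cos_def using cos_sub self_in_cos by blast

lemma finD: "finite D" using is_code_finite[OF D] .

lemma card_Cos: "card Dp * card Cos = card D"
proof -
  have "card Dp * card Cos = card (\<Union>Cos)"
  proof (rule card_partition)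
    show "finite Cos" unfolding Cos_def using finD by simp
    show "finite (\<Union>Cos)" using Union_Cos finD by simp
    show "\<And>c. c \<in> Cos \<Longrightarrow> card c = card Dp" unfolding Cos_def using card_cos by blast
    show "\<And>c1 c2. c1 \<in> Cos \<Longrightarrow> c2 \<in> Cos \<Longrightarrow> c1 \<noteq> c2 \<Longrightarrow> c1 \<inter> c2 = {}"
      using cos_disjoint by blast
  qed
  then show ?thesis using Union_Cos by simp
qed

definition Q :: "('a list \<Rightarrow> complex) set" where
  "Q = {v. (\<forall>x. x \<notin> D \<longrightarrow> v x = 0) \<and> (\<forall>x\<in>D. \<forall>s\<in>Dp. v (vadd x s) = v x)}"

lemma Q_const: "v \<in> Q \<Longrightarrow> x \<in> D \<Longrightarrow> y \<in> cos x \<Longrightarrow> v y = v x"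
  unfolding Q_def cos_def by auto

definition ind :: "'a list set \<Rightarrow> 'a list \<Rightarrow> complex" where
  "ind A = (\<lambda>x. if x \<in> A then 1 else 0)"

lemma ind_inj: "inj_on ind Cos"
proof
  fix A B assume "ind A = ind B"
  then have "x \<in> A \<longleftrightarrow> x \<in> B" for x using fun_cong[of "ind A" "ind B" x] unfolding ind_def
    by (auto split: if_splits)
  then show "A = B" by blast
qed

lemma ind_in_Q: "A \<in> Cos \<Longrightarrow> ind A \<in> Q"
proof -
  assume A: "A \<in> Cos"
  then obtain x0 where x0: "x0 \<in> D" "A = cos x0" unfolding Cos_def by blast
  have AD: "A \<subseteq> D" using cos_sub[OF x0(1)] x0 by simp
  have inv: "vadd x s \<in> A \<longleftrightarrow> x \<in> A" if x: "x \<in> D" and s: "s \<in> Dp" for x s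
  proof
    have xs: "vadd x s \<in> cos x" unfolding cos_def using s by blast
    assume "vadd x s \<in> A"
    then have "cos (vadd x s) = A" using cos_eq[OF x0(1)] x0 by simp
    moreover have "cos (vadd x s) = cos x" using cos_eq[OF x xs] .
    ultimately show "x \<in> A" using self_in_cos[OF x] by simp
  next
    have xs: "vadd x s \<in> cos x" unfolding cos_def using s by blast
    assume "x \<in> A"
    then have "cos x = A" using cos_eq[OF x0(1)] x0 by simp
    then show "vadd x s \<in> A" using xs by simp
  qed
  show "ind A \<in> Q" unfolding Q_def ind_def using AD inv by auto
qed

end


context cssq begin

lemma finCos: "finite Cos" unfolding Cos_def using finD by simp

lemma ind_at: "A \<in> Cos \<Longrightarrow> y \<in> D \<Longrightarrow> ind A y = (if A = cos y then 1 else 0)"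
proof -
  assume A: "A \<in> Cos" and y: "y \<in> D"
  obtain x where x: "x \<in> D" "A = cos x" using A unfolding Cos_def by blast
  show ?thesis
  proof (cases "y \<in> A")
    case True
    then have "cos y = A" using cos_eq[OF x(1)] x by simp
    then show ?thesis using True by (simp add: ind_def)
  next
    case False
    then have "A \<noteq> cos y" using self_in_cos[OF y] by blast
    then show ?thesis using False by (simp add: ind_def)
  qed
qed

lemma ind_out: "A \<in> Cos \<Longrightarrow> y \<notin> D \<Longrightarrow> ind A y = 0"
  unfolding ind_def Cos_def using cos_sub by auto

lemma dim_Q: "vector_space.dim (\<lambda>c v. (\<lambda>x. c * v x)) Q = card Cos"
proof -
  interpret vs2: vector_space "\<lambda>c v. (\<lambda>x. c * v x) :: 'a list \<Rightarrow> complex" by (rule vs_fun)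
  define E where "E = ind ` Cos"
  have cardE: "card E = card Cos" unfolding E_def by (rule card_image[OF ind_inj])
  have finE: "finite E" unfolding E_def using finCos by simp
  have EQ: "E \<subseteq> Q" unfolding E_def using ind_in_Q by blast
  have span: "Q \<subseteq> vs2.span E"
  proof
    fix v assume v: "v \<in> Q"
    define c where "c A = v (SOME x. x \<in> A)" for A
    have "v = (\<Sum>A\<in>Cos. (\<lambda>y. c A * ind A y))"
    proof
      fix y
      have "(\<Sum>A\<in>Cos. (\<lambda>y. c A * ind A y)) y = (\<Sum>A\<in>Cos. c A * ind A y)" by (rule sum_fun_apply)
      also have "\<dots> = v y"
      proof (cases "y \<in> D")
        case False
        then show ?thesis using v ind_out unfolding Q_def by simp
      next
        case True
        have cy: "cos y \<in> Cos" unfolding Cos_def using True by blast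
        have "(\<Sum>A\<in>Cos. c A * ind A y) = (\<Sum>A\<in>Cos. if A = cos y then c A else 0)"
          using True by (intro sum.cong refl) (simp add: ind_at)
        also have "\<dots> = c (cos y)" using finCos cy by (simp add: sum.delta')
        also have "\<dots> = v y"
        proof -
          have "(SOME x. x \<in> cos y) \<in> cos y" using self_in_cos[OF True] by (rule someI)
          then show ?thesis unfolding c_def using Q_const[OF v True] by simp
        qed
        finally show ?thesis .
      qed
      finally show "v y = (\<Sum>A\<in>Cos. (\<lambda>y. c A * ind A y)) y" by simp
    qed
    also have "\<dots> \<in> vs2.span E"
    proof (rule vs2.span_sum)
      fix A assume "A \<in> Cos"
      then have "ind A \<in> vs2.span E" unfolding E_def by (intro vs2.span_base) blast
      then show "(\<lambda>y. c A * ind A y) \<in> vs2.span E" by (rule vs2.span_scale)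
    qed
    finally show "v \<in> vs2.span E" .
  qed
  have indep: "vs2.independent E"
  proof (rule vs2.independent_if_scalars_zero[OF finE])
    fix f e assume z: "(\<Sum>x\<in>E. (\<lambda>y. f x * x y)) = 0" and e: "e \<in> E"
    obtain A where A: "A \<in> Cos" "e = ind A" using e unfolding E_def by blast
    obtain x0 where x0: "x0 \<in> D" "A = cos x0" using A unfolding Cos_def by blast
    have val: "e' x0 = (if e' = e then 1 else 0)" if e'E: "e' \<in> E" for e'
    proof -
      obtain A' where A': "A' \<in> Cos" "e' = ind A'" using e'E unfolding E_def by blast
      have "e' x0 = (if A' = A then 1 else 0)" using ind_at[OF A'(1) x0(1)] A'(2) x0(2) by simp
      moreover have "A' = A \<longleftrightarrow> e' = e" using ind_inj A A' unfolding inj_on_def by auto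
      ultimately show ?thesis by simp
    qed
    have "0 = (\<Sum>x\<in>E. (\<lambda>y. f x * x y)) x0" using z by simp
    also have "\<dots> = (\<Sum>x\<in>E. f x * x x0)" by (rule sum_fun_apply)
    also have "\<dots> = (\<Sum>x\<in>E. if x = e then f x else 0)" by (intro sum.cong refl) (simp add: val)
    also have "\<dots> = f e" using finE e by (simp add: sum.delta')
    finally show "f e = 0" by simp
  qed
  have "card E = vs2.dim Q" by (rule vs2.basis_card_eq_dim[OF EQ span indep])
  then show ?thesis using cardE by simp
qed

end


context cssq begin

abbreviation U where "U \<equiv> {x :: 'a list. length x = N}"

lemma cD: "card D = CARD('a) ^ code_dim D" by (rule card_code_dim[OF D])
lemma cnt: "card D * card Dp = CARD('a) ^ N" by (rule count_dual[OF D])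

lemma q2: "CARD('a) \<ge> 2" by (rule card_field_ge2)

lemma kN: "code_dim D \<le> N"
proof -
  have DU: "D \<subseteq> U" using lenD by blast
  have "card D \<le> card U" by (rule card_mono[OF finite_words DU])
  moreover have "card U = CARD('a) ^ N" by (rule card_words)
  ultimately have le: "CARD('a) ^ code_dim D \<le> CARD('a) ^ N" using cD by simp
  have "1 < CARD('a)" using q2 by linarith
  then show ?thesis using le by (rule power_le_imp_le_exp)
qed

lemma cDp: "card Dp = CARD('a) ^ (N - code_dim D)"
proof -
  have "CARD('a) ^ code_dim D * card Dp = CARD('a) ^ code_dim D * CARD('a) ^ (N - code_dim D)"
    using cnt cD kN by (simp add: power_add[symmetric])
  then show ?thesis using q2 by simp
qed

lemma twok: "N \<le> 2 * code_dim D"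
proof -
  have "card Dp \<le> card D" by (rule card_mono[OF finD DD])
  then have "CARD('a) ^ (N - code_dim D) \<le> CARD('a) ^ code_dim D" using cD cDp by simp
  moreover have "1 < CARD('a)" using q2 by linarith
  ultimately have "N - code_dim D \<le> code_dim D" using power_le_imp_le_exp by blast
  then show ?thesis by linarith
qed

lemma card_Cos_val: "card Cos = CARD('a) ^ (2 * code_dim D - N)"
proof -
  have "CARD('a) ^ (N - code_dim D) * card Cos = CARD('a) ^ (N - code_dim D) * CARD('a) ^ (2 * code_dim D - N)"
  proof -
    have e1: "CARD('a) ^ (N - code_dim D) * card Cos = CARD('a) ^ code_dim D"
      using card_Cos cDp cD by simp
    have h: "code_dim D = (N - code_dim D) + (2 * code_dim D - N)" using kN twok by linarith
    have e2: "CARD('a) ^ code_dim D = CARD('a) ^ (N - code_dim D) * CARD('a) ^ (2 * code_dim D - N)"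
      using arg_cong[OF h, of "\<lambda>j. CARD('a) ^ j"] by (simp only: power_add)
    show ?thesis using e1 e2 by simp
  qed
  then show ?thesis using q2 by simp
qed

lemma double_dual: "dual N Dp = D"
proof -
  have sub: "D \<subseteq> dual N Dp"
    unfolding dual_def using lenD by (auto simp: dual_def word_dot_comm)
  have "card Dp * card (dual N Dp) = CARD('a) ^ N" by (rule count_dual[OF Dp_code])
  then have "card Dp * card (dual N Dp) = card Dp * card D" using cnt by (simp add: mult.commute)
  moreover have "card Dp > 0" using cDp by simp
  ultimately have "card (dual N Dp) = card D" by simp
  moreover have "finite (dual N Dp)" by (rule is_code_finite[OF dual_is_code])
  ultimately have "D = dual N Dp" using sub by (intro card_subset_eq) simp_all
  then show ?thesis by simp
qed

lemma min_dist_le: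
  assumes x: "x \<in> D" "x \<noteq> replicate N 0"
  shows "min_dist D \<le> card {i. i < N \<and> x ! i \<noteq> 0}"
proof -
  define S where "S = {hamming_dist x y | x y. x \<in> D \<and> y \<in> D \<and> x \<noteq> y}"
  have "S \<subseteq> (\<lambda>(x, y). hamming_dist x y) ` (D \<times> D)" unfolding S_def by auto
  then have fS: "finite S" by (rule finite_subset) (simp add: finD)
  have "hamming_dist x (replicate N 0) \<in> S"
    unfolding S_def using x is_code_zero[OF D] by blast
  moreover have "hamming_dist x (replicate N 0) = card {i. i < N \<and> x ! i \<noteq> 0}"
    unfolding hamming_dist_def using lenD[OF x(1)] by (intro arg_cong[where f=card]) auto
  ultimately have "Min S \<le> card {i. i < N \<and> x ! i \<noteq> 0}" using Min_le[OF fS] by simp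
  then show ?thesis unfolding min_dist_def S_def .
qed

lemma small_in_D_zero:
  assumes x: "x \<in> D" and w: "card {i. i < N \<and> x ! i \<noteq> 0} < min_dist D"
  shows "x = replicate N 0"
  using min_dist_le[OF x] w by (cases "x = replicate N 0") auto

end


context cssq begin

lemma Q_zero_out: "v \<in> Q \<Longrightarrow> x \<notin> D \<Longrightarrow> v x = 0" unfolding Q_def by auto
lemma Q_inv: "v \<in> Q \<Longrightarrow> x \<in> D \<Longrightarrow> s \<in> Dp \<Longrightarrow> v (vadd x s) = v x" unfolding Q_def by auto

lemma detect:
  assumes la: "length a = N" and lb: "length b = N" and wt: "pauli_weight a b < min_dist D"
  shows "\<exists>lam. \<forall>u\<in>Q. \<forall>v\<in>Q. qinner N u (pauli_err p m N a b v) = lam * qinner N u v"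
proof -
  have fin: "finite {i. i < N}" by simp
  have wa: "card {i. i < N \<and> a ! i \<noteq> 0} < min_dist D"
  proof -
    have "card {i. i < N \<and> a ! i \<noteq> 0} \<le> pauli_weight a b"
      unfolding pauli_weight_def using la by (intro card_mono) auto
    then show ?thesis using wt by linarith
  qed
  have wb: "card {i. i < N \<and> b ! i \<noteq> 0} < min_dist D"
  proof -
    have "card {i. i < N \<and> b ! i \<noteq> 0} \<le> pauli_weight a b"
      unfolding pauli_weight_def using la by (intro card_mono) auto
    then show ?thesis using wt by linarith
  qed
  show ?thesis
  proof (cases "a \<in> D")
    case False
    have "qinner N u (pauli_err p m N a b v) = 0 * qinner N u v" if u: "u \<in> Q" and v: "v \<in> Q" for u v
    proof -
      have per: "cnj (u y) * pauli_err p m N a b v y = 0" if y: "y \<in> U" for y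
      proof (cases "y \<in> D \<and> map2 (-) y a \<in> D")
        case True
        then have "map2 (-) y (map2 (-) y a) \<in> D" using is_code_sub[OF D] by blast
        then have "a \<in> D" using y la by (simp add: vsub_vsub)
        then show ?thesis using False by simp
      next
        case False
        then show ?thesis using Q_zero_out[OF u] Q_zero_out[OF v] unfolding pauli_err_def by auto
      qed
      have "qinner N u (pauli_err p m N a b v) = 0"
        unfolding qinner_def by (rule sum.neutral) (use per in blast)
      then show ?thesis by simp
    qed
    then show ?thesis by blast
  next
    case aD: True
    have a0: "a = replicate N 0" by (rule small_in_D_zero[OF aD wa])
    have Ev: "pauli_err p m N a b v y = chi (word_dot b y) * v y" if "y \<in> U" for v y
      using that a0 by (simp add: pauli_err_def vsub_zero)
    show ?thesis
    proof (cases "b \<in> D")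
      case True
      have b0: "b = replicate N 0" by (rule small_in_D_zero[OF True wb])
      have "qinner N u (pauli_err p m N a b v) = 1 * qinner N u v" for u v
        unfolding qinner_def using Ev b0 by (simp add: word_dot_zero_left add_char_0)
      then show ?thesis by blast
    next
      case False
      then have "b \<notin> dual N Dp" using double_dual by simp
      then obtain s where s: "s \<in> Dp" "word_dot s b \<noteq> 0" using lb unfolding dual_def by auto
      obtain z0 :: 'a where z0: "chi z0 \<noteq> 1" using add_char_nontrivial by blast
      define t where "t = vsc (z0 / word_dot b s) s"
      have tDp: "t \<in> Dp" unfolding t_def by (rule is_code_sc[OF Dp_code s(1)])
      have bt: "word_dot b t = z0" unfolding t_def using s(2) by (simp add: word_dot_vsc_right word_dot_comm)
      have lt: "length t = N" using lenDp[OF tDp] .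
      have "qinner N u (pauli_err p m N a b v) = 0 * qinner N u v" if u: "u \<in> Q" and v: "v \<in> Q" for u v
      proof -
        define G where "G y = cnj (u y) * (chi (word_dot b y) * v y)" for y
        have inv: "w (vadd y t) = w y" if w: "w \<in> Q" and y: "y \<in> U" for w y
        proof (cases "y \<in> D")
          case True then show ?thesis using Q_inv[OF w True tDp] by simp
        next
          case False
          have "vadd y t \<notin> D"
          proof
            assume "vadd y t \<in> D"
            then have "vadd (vadd y t) (vsc (-1) t) \<in> D"
              using is_code_add[OF D _ is_code_sc[OF D]] tDp DD by blast
            then show False using False y lt by (simp add: vadd_cancel)
          qed
          then show ?thesis using Q_zero_out[OF w] False by simp
        qed
        define S where "S = (\<Sum>y\<in>U. G y)"
        have "S = (\<Sum>y\<in>U. G (vadd y t))"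
          unfolding S_def
        proof (rule sum.reindex_bij_witness[of U "\<lambda>y. vadd y t" "\<lambda>y. vadd y (vsc (-1) t)"])
          fix y assume y: "y \<in> U"
          show "vadd (vadd y (vsc (-1) t)) t = y" using y lt by (simp add: vadd_cancel2)
          show "vadd y (vsc (-1) t) \<in> U" using y lt by simp
          show "G (vadd (vadd y (vsc (-1) t)) t) = G y" using y lt by (simp add: vadd_cancel2)
        next
          fix y assume y: "y \<in> U"
          show "vadd (vadd y t) (vsc (-1) t) = y" using y lt by (simp add: vadd_cancel)
          show "vadd y t \<in> U" using y lt by simp
        qed
        also have "\<dots> = (\<Sum>y\<in>U. G y * chi z0)"
        proof (rule sum.cong[OF refl])
          fix y assume y: "y \<in> U"
          have "word_dot b (vadd y t) = word_dot b y + z0"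
            using y lt bt by (simp add: word_dot_vadd_right)
          then show "G (vadd y t) = G y * chi z0"
            unfolding G_def using inv[OF u y] inv[OF v y] by (simp add: add_char_add)
        qed
        also have "\<dots> = S * chi z0" unfolding S_def by (simp add: sum_distrib_right)
        finally have "S * (1 - chi z0) = 0" by (simp add: algebra_simps)
        then have S0: "S = 0" using z0 by simp
        have "qinner N u (pauli_err p m N a b v) = S"
          unfolding qinner_def S_def G_def by (intro sum.cong refl) (simp add: Ev)
        then show ?thesis using S0 by simp
      qed
      then show ?thesis by blast
    qed
  qed
qed

end


theorem theorem12:
  fixes p m i \<alpha> \<beta> :: nat
    and f h g1 g2 h1 h2 :: "'a::{field,finite} poly"
    and M :: "'a ^2^2" and \<gamma> :: 'a
  defines "Th \<equiv> (\<lambda>a::'a. a ^ (p ^ i))"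
  assumes "prime p" and "CARD('a) = p ^ m" and "of_nat p = (0::'a)"
    and "\<alpha> > 0" and "\<beta> > 0"
    and "aut_order Th dvd \<alpha>" and "aut_order (R_theta Th) dvd \<beta>"
    and "xn1 \<alpha> = skew_mult Th h f"
    and "xn1 \<beta> = skew_mult Th h1 g1" and "xn1 \<beta> = skew_mult Th h2 g2"
    and "FqR_skew_cyclic Th \<alpha> \<beta>
           (code_tensor (skew_code_gen Th \<alpha> f)
              (xi_sum (skew_code_gen Th \<beta> g1) (skew_code_gen Th \<beta> g2)))"
    and "right_dvd Th (xn1 \<alpha>) (skew_mult Th (skew_dagger Th h) h)"
    and "right_dvd Th (xn1 \<beta>) (skew_mult Th (skew_dagger Th h1) h1)"
    and "right_dvd Th (xn1 \<beta>) (skew_mult Th (skew_dagger Th h2) h2)"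
    and "invertible M" and "\<gamma> \<noteq> 0"
    and "M ** Finite_Cartesian_Product.transpose M = mat \<gamma>"
  shows "let C = code_tensor (skew_code_gen Th \<alpha> f)
                   (xi_sum (skew_code_gen Th \<beta> g1) (skew_code_gen Th \<beta> g2));
             GC = gray M ` C; n = \<alpha> + 2 * \<beta>; k = code_dim GC; dH = min_dist GC
         in 2 * k \<ge> n \<and>
            (\<exists>Q :: ('a list \<Rightarrow> complex) set. quantum_code p m n (2 * k - n) dH Q)"
proof -
  interpret ff: ffield p m "TYPE('a)"
    by unfold_locales (use assms(2-4) in auto)
  have R: "rhom Th" unfolding Th_def by (rule ff.Th_rhom)
  have I: "inj Th" unfolding Th_def by (rule ff.Th_inj)
  have Tm: "Th ^^ m = id" unfolding Th_def by (rule ff.Th_funpow_m)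
  have Ta: "Th ^^ \<alpha> = id" by (rule ff.aut_order_period[OF Tm ff.m_pos assms(7)])
  have Tb: "Th ^^ \<beta> = id" by (rule ff.R_theta_period[OF Tm ff.m_pos assms(8)])
  define A where "A = skew_code_gen Th \<alpha> f"
  define B1 where "B1 = skew_code_gen Th \<beta> g1"
  define B2 where "B2 = skew_code_gen Th \<beta> g2"
  have cA: "is_code \<alpha> A" unfolding A_def by (rule skew_code_gen_is_code[OF R assms(5)])
  have cB1: "is_code \<beta> B1" unfolding B1_def by (rule skew_code_gen_is_code[OF R assms(6)])
  have cB2: "is_code \<beta> B2" unfolding B2_def by (rule skew_code_gen_is_code[OF R assms(6)])
  have dA: "dual \<alpha> A \<subseteq> A"
  proof
    fix w assume "w \<in> dual \<alpha> A"
    then have "length w = \<alpha>" "\<forall>u\<in>skew_code_gen Th \<alpha> f. word_dot u w = 0"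
      unfolding dual_def A_def by auto
    then show "w \<in> A" unfolding A_def
      by (rule dual_contained[OF R I assms(5) Ta assms(9) assms(13)])
  qed
  have dB1: "dual \<beta> B1 \<subseteq> B1"
  proof
    fix w assume "w \<in> dual \<beta> B1"
    then have "length w = \<beta>" "\<forall>u\<in>skew_code_gen Th \<beta> g1. word_dot u w = 0"
      unfolding dual_def B1_def by auto
    then show "w \<in> B1" unfolding B1_def
      by (rule dual_contained[OF R I assms(6) Tb assms(10) assms(14)])
  qed
  have dB2: "dual \<beta> B2 \<subseteq> B2"
  proof
    fix w assume "w \<in> dual \<beta> B2"
    then have "length w = \<beta>" "\<forall>u\<in>skew_code_gen Th \<beta> g2. word_dot u w = 0"
      unfolding dual_def B2_def by auto
    then show "w \<in> B2" unfolding B2_def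
      by (rule dual_contained[OF R I assms(6) Tb assms(11) assms(15)])
  qed
  define GC where "GC = gray M ` code_tensor A (xi_sum B1 B2)"
  have GCeq: "GC = {x @ Pm M c1 c2 | x c1 c2. x \<in> A \<and> c1 \<in> B1 \<and> c2 \<in> B2 \<and> length c1 = length c2}"
    unfolding GC_def by (rule gray_image)
  have P1: "is_code (\<alpha> + 2 * \<beta>) GC \<and> dual (\<alpha> + 2 * \<beta>) GC \<subseteq> GC"
    by (rule part1[OF cA dA cB1 dB1 cB2 dB2 assms(18) assms(17) assms(16) GCeq])
  interpret cs: cssq p m "\<alpha> + 2 * \<beta>" GC
    by unfold_locales (use P1 in auto)
  define n where "n = \<alpha> + 2 * \<beta>"
  define k where "k = code_dim GC"
  have tk: "n \<le> 2 * k" unfolding n_def k_def by (rule cs.twok)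
  have qc: "quantum_code p m n (2 * k - n) (min_dist GC) cs.Q"
    unfolding quantum_code_def
  proof (intro conjI ballI allI impI)
    fix v and x :: "'a list" assume v: "v \<in> cs.Q" and x: "length x \<noteq> n"
    have "x \<notin> GC" using x cs.lenD unfolding n_def by auto
    then show "v x = 0" using cs.Q_zero_out[OF v] by simp
  next
    show "(\<lambda>x. 0) \<in> cs.Q" unfolding cs.Q_def by simp
  next
    fix u v assume "u \<in> cs.Q" "v \<in> cs.Q"
    then show "(\<lambda>x. u x + v x) \<in> cs.Q" unfolding cs.Q_def by simp
  next
    fix c v assume "v \<in> cs.Q"
    then show "(\<lambda>x. c * v x) \<in> cs.Q" unfolding cs.Q_def by simp
  next
    show "vector_space.dim (\<lambda>c v. (\<lambda>x. c * v x)) cs.Q = (p ^ m) ^ (2 * k - n)"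
      using cs.dim_Q cs.card_Cos_val assms(3) unfolding k_def n_def by simp
  next
    fix a b :: "'a list" assume "length a = n" "length b = n" "pauli_weight a b < min_dist GC"
    then show "\<exists>lam. \<forall>u\<in>cs.Q. \<forall>v\<in>cs.Q. qinner n u (pauli_err p m n a b v) = lam * qinner n u v"
      unfolding n_def by (rule cs.detect)
  qed
  show ?thesis
    unfolding Let_def
    using tk qc unfolding GC_def A_def B1_def B2_def k_def n_def by blast
qed


end
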